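(* Fix $K\in\mathbb N$ and a realization of the random basis functions. Then there exists a random sequence $(m_i)_{i\ge0}$ of sample sizes such that $\lVert\hat Q^{K,m_i,i}-\tilde Q^K\rVert_\pi\to0$ $\mathbb Q$-almost surely as $i\to\infty$.
   Context: Let $d,N\ge1$, let $X=(X_0,\dots,X_N)$ be a discrete-time Markov process with values in $\mathbb R^d$, $\mathbb Q$ the pricing measure, $\pi_n$ the law of $X_n$ under $\mathbb Q$, $\mathbb E$ expectation under $\mathbb Q$, $g:\mathbb R^d\to[0,\infty)$ a measurable payoff with $g(X_n)$ square integrable, $\alpha\in(0,1)$ the discount factor, $(E_nJ)(x):=\mathbb E[J(X_{n+1})\mid X_n=x]$, $\lVert f\rVert_{\pi_n}^2:=\int|f|^2d\pi_n$. Random basis functions: $\alpha_k\in\mathbb R^{d+1},\beta_k\in\mathbb R$ with i.i.d. standard Gaussian entries, $\phi_k(x,n):=\sigma(\alpha_k^\top(x,n)^\top+\beta_k)$, $\sigma$ a bounded activation function, $\phi_{1:K}:=(\phi_1,\dots,\phi_K)$ (row vector), $(\Phi_{K,n}\theta)(x):=\sum_{k=1}^K\theta_k\phi_k(x,n)$, $\Phi_K\theta:=(\Phi_{K,0}\theta,\dots,\Phi_{K,N-1}\theta)$. On $(L^2)^N:=L^2(\pi_0)\times\dots\times L^2(\pi_{N-1})$ use $\lVert J\rVert_\pi:=\frac1N\sum_{n=0}^{N-1}\lVert J_n\rVert_{\pi_n}$; $\Pi^KJ:=\arg\min_{\Phi_K\theta}\lVert\Phi_K\theta-J\rVert_\pi$;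 $H(J_0,\dots,J_{N-1}):=(\alpha E_0\max(g,J_1),\dots,\alpha E_{N-2}\max(g,J_{N-1}),\alpha E_{N-1}g)$. $\tilde Q^K=\Phi_K\theta_K^\star$ is the unique fixed point of the contraction $\Pi^KH$. Assuming $\mathbb E[\sum_{n=0}^{N-1}\phi_{1:K}^\top(X_n,n)\phi_{1:K}(X_n,n)]$ invertible, iterating $\Pi^KH$ from $\Phi_K\theta_K^0$ corresponds to the weights $\theta_K^{i+1}:=\alpha\big(\mathbb E[\sum_{n}\phi_{1:K}^\top(X_n,n)\phi_{1:K}(X_n,n)]\big)^{-1}\mathbb E[\sum_{n=0}^{N-1}\phi_{1:K}^\top(X_n,n)\max(g(X_{n+1}),(\Phi_{K,n+1}\theta_K^i)(X_{n+1}))]$ (with the $n=N-1$ term read as $g(X_N)$), and $\theta_K^i\to\theta_K^\star$. Implementable version: with i.i.d. samples $(x_0^j,\dots,x_N^j)$, $j=1,\dots,m$, of $X$ under $\mathbb Q$ fixed for all iterations, $\hat\theta^0_{K,m}:=\theta_K^0$ and $\hat\theta^{i+1}_{K,m}$ is given by the same formula with expectations replaced by sums over $j=1,\dots,m$ and $X$ by the samples $x^j$; finally $\hat Q^{K,m,i}:=\Phi_K\hat\theta^i_{K,m}$. *)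

theory Defs
  imports "HOL-Probability.Probability"
begin

text \<open>Random basis functions for a fixed realization of the Gaussian weights:
  alpha_k = (a k, c k) in R^(d+1), beta_k = b k, activation sig.
  phi_k(x,n) = sig(a_k . x + c_k * n + beta_k).\<close>
definition rbf :: "(real \<Rightarrow> real) \<Rightarrow> ('k \<Rightarrow> real^'d) \<Rightarrow> ('k \<Rightarrow> real) \<Rightarrow> ('k \<Rightarrow> real)
    \<Rightarrow> 'k \<Rightarrow> real^'d \<Rightarrow> nat \<Rightarrow> real" where
  "rbf sig a c b k x n = sig (a k \<bullet> x + c k * real n + b k)"

definition Phi :: "('k::finite \<Rightarrow> real^'d \<Rightarrow> nat \<Rightarrow> real) \<Rightarrow> nat \<Rightarrow> real^'k \<Rightarrow> real^'d \<Rightarrow> real" where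
  "Phi phi n \<theta> x = (\<Sum>k\<in>UNIV. \<theta> $ k * phi k x n)"

definition target :: "('k::finite \<Rightarrow> real^'d \<Rightarrow> nat \<Rightarrow> real) \<Rightarrow> (real^'d \<Rightarrow> real) \<Rightarrow> nat \<Rightarrow> nat
    \<Rightarrow> real^'k \<Rightarrow> real^'d \<Rightarrow> real" where
  "target phi g N n \<theta> x = (if Suc n = N then g x else max (g x) (Phi phi (Suc n) \<theta> x))"

definition popGram :: "'w measure \<Rightarrow> (nat \<Rightarrow> 'w \<Rightarrow> real^'d) \<Rightarrow> nat
    \<Rightarrow> ('k::finite \<Rightarrow> real^'d \<Rightarrow> nat \<Rightarrow> real) \<Rightarrow> real^'k^'k" where
  "popGram M X N phi = (\<chi> i j. \<Sum>n<N. \<integral>\<omega>. phi i (X n \<omega>) n * phi j (X n \<omega>) n \<partial>M)"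

definition popMap :: "'w measure \<Rightarrow> (nat \<Rightarrow> 'w \<Rightarrow> real^'d) \<Rightarrow> nat
    \<Rightarrow> ('k::finite \<Rightarrow> real^'d \<Rightarrow> nat \<Rightarrow> real) \<Rightarrow> (real^'d \<Rightarrow> real) \<Rightarrow> real \<Rightarrow> real^'k \<Rightarrow> real^'k" where
  "popMap M X N phi g alpha \<theta> = alpha *\<^sub>R (matrix_inv (popGram M X N phi) *v
      (\<chi> i. \<Sum>n<N. \<integral>\<omega>. phi i (X n \<omega>) n * target phi g N n \<theta> (X (Suc n) \<omega>) \<partial>M))"

text \<open>theta_K^star: the unique fixed point (weights of tilde Q^K).\<close>
definition thetaStar :: "'w measure \<Rightarrow> (nat \<Rightarrow> 'w \<Rightarrow> real^'d) \<Rightarrow> nat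
    \<Rightarrow> ('k::finite \<Rightarrow> real^'d \<Rightarrow> nat \<Rightarrow> real) \<Rightarrow> (real^'d \<Rightarrow> real) \<Rightarrow> real \<Rightarrow> real^'k" where
  "thetaStar M X N phi g alpha = (THE \<theta>. popMap M X N phi g alpha \<theta> = \<theta>)"

definition empMap :: "(nat \<Rightarrow> nat \<Rightarrow> 'w \<Rightarrow> real^'d) \<Rightarrow> nat \<Rightarrow> 'w \<Rightarrow> nat
    \<Rightarrow> ('k::finite \<Rightarrow> real^'d \<Rightarrow> nat \<Rightarrow> real) \<Rightarrow> (real^'d \<Rightarrow> real) \<Rightarrow> real \<Rightarrow> real^'k \<Rightarrow> real^'k" where
  "empMap Y m \<omega> N phi g alpha \<theta> = alpha *\<^sub>R (matrix_inv
      (\<chi> i l. \<Sum>j<m. \<Sum>n<N. phi i (Y j n \<omega>) n * phi l (Y j n \<omega>) n) *v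
      (\<chi> i. \<Sum>j<m. \<Sum>n<N. phi i (Y j n \<omega>) n * target phi g N n \<theta> (Y j (Suc n) \<omega>)))"

definition thetaHat :: "(nat \<Rightarrow> nat \<Rightarrow> 'w \<Rightarrow> real^'d) \<Rightarrow> nat \<Rightarrow> 'w \<Rightarrow> nat
    \<Rightarrow> ('k::finite \<Rightarrow> real^'d \<Rightarrow> nat \<Rightarrow> real) \<Rightarrow> (real^'d \<Rightarrow> real) \<Rightarrow> real \<Rightarrow> real^'k \<Rightarrow> nat \<Rightarrow> real^'k" where
  "thetaHat Y m \<omega> N phi g alpha \<theta>0 i = (empMap Y m \<omega> N phi g alpha ^^ i) \<theta>0"

definition distPi :: "'w measure \<Rightarrow> (nat \<Rightarrow> 'w \<Rightarrow> real^'d) \<Rightarrow> nat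
    \<Rightarrow> (nat \<Rightarrow> real^'d \<Rightarrow> real) \<Rightarrow> (nat \<Rightarrow> real^'d \<Rightarrow> real) \<Rightarrow> real" where
  "distPi M X N J J' = (1 / real N) * (\<Sum>n<N. sqrt (\<integral>x. (J n x - J' n x)\<^sup>2 \<partial>(distr M borel (X n))))"

definition histAlg :: "'w measure \<Rightarrow> (nat \<Rightarrow> 'w \<Rightarrow> real^'d) \<Rightarrow> nat \<Rightarrow> 'w measure" where
  "histAlg M X n = sigma (space M) {X i -` A \<inter> space M | i A. i \<le> n \<and> A \<in> sets borel}"

definition markov :: "'w measure \<Rightarrow> (nat \<Rightarrow> 'w \<Rightarrow> real^'d) \<Rightarrow> nat \<Rightarrow> bool" where
  "markov M X N \<longleftrightarrow> (\<forall>n<N. \<forall>A\<in>sets (borel :: (real^'d) measure).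
     AE \<omega> in M. real_cond_exp M (histAlg M X n) (\<lambda>w. indicator A (X (Suc n) w)) \<omega>
              = real_cond_exp M (vimage_algebra (space M) (X n) borel) (\<lambda>w. indicator A (X (Suc n) w)) \<omega>)"

definition path :: "nat \<Rightarrow> (nat \<Rightarrow> 'w \<Rightarrow> real^'d) \<Rightarrow> 'w \<Rightarrow> nat \<Rightarrow> real^'d" where
  "path N Z \<omega> = (\<lambda>n\<in>{..N}. Z n \<omega>)"

end

theory Submission
  imports Defs
begin

lemma (in prob_space) wlln_subseq:
  fixes Z :: "nat \<Rightarrow> 'a \<Rightarrow> real"
  assumes ind: "indep_vars (\<lambda>_. borel) Z UNIV"
  and meas[measurable]: "\<And>j. Z j \<in> borel_measurable M"
  and sq: "\<And>j. integrable M (\<lambda>x. (Z j x)^2)"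
  and mean: "\<And>j. expectation (Z j) = \<mu>"
  and var: "\<And>j. expectation (\<lambda>x. (Z j x - \<mu>)^2) \<le> V"
  shows "AE x in M. (\<lambda>i. (\<Sum>j<8^i. Z j x) / 8^i) \<longlonglongrightarrow> \<mu>"
proof -
  define W where "W j x = Z j x - \<mu>" for j x
  have intZ: "integrable M (Z j)" for j using sq square_integrable_imp_integrable meas by blast
  have W2: "integrable M (\<lambda>x. (W j x)^2)" for j
  proof -
    have "(\<lambda>x. (W j x)^2) = (\<lambda>x. (Z j x)^2 - 2 * \<mu> * Z j x + \<mu>^2)"
      by (auto simp: W_def power2_eq_square algebra_simps)
    thus ?thesis using sq intZ by simp
  qed
  have intW: "integrable M (W j)" for j using intZ unfolding W_def by simp
  have EW: "expectation (W j) = 0" for j unfolding W_def[abs_def] using intZ[of j] mean[of j] by (simp add: prob_space)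
  have indW: "indep_vars (\<lambda>_. borel) W UNIV"
    unfolding W_def by (rule indep_vars_compose2[OF ind, where Y="\<lambda>_ z. z - \<mu>"]) auto
  have cross: "expectation (\<lambda>x. W j x * W k x) = 0" and crossI: "integrable M (\<lambda>x. W j x * W k x)"
    if "j \<noteq> k" for j k
  proof -
    have i2: "indep_vars (\<lambda>_. borel) W {j,k}" by (rule indep_vars_subset[OF indW]) auto
    have "(\<integral>x. (\<Prod>i\<in>{j,k}. W i x) \<partial>M) = (\<Prod>i\<in>{j,k}. expectation (W i))"
      by (rule indep_vars_lebesgue_integral[OF _ i2]) (auto intro: intW)
    thus "expectation (\<lambda>x. W j x * W k x) = 0" using that EW by simp
    have "integrable M (\<lambda>x. (\<Prod>i\<in>{j,k}. W i x))"
      by (rule indep_vars_integrable[OF _ i2]) (auto intro: intW)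
    thus "integrable M (\<lambda>x. W j x * W k x)" using that by simp
  qed
  have prodI: "integrable M (\<lambda>x. W j x * W k x)" for j k
    using crossI[of j k] W2[of j] by (cases "j = k") (auto simp: power2_eq_square)
  have ES: "expectation (\<lambda>x. (\<Sum>j<m. W j x)^2) \<le> real m * V" for m
  proof -
    have "expectation (\<lambda>x. (\<Sum>j<m. W j x)^2) = expectation (\<lambda>x. \<Sum>j<m. \<Sum>k<m. W j x * W k x)"
      by (simp add: power2_eq_square sum_product)
    also have "\<dots> = (\<Sum>j<m. \<Sum>k<m. expectation (\<lambda>x. W j x * W k x))"
      using prodI by (simp add: integral_sum)
    also have "\<dots> = (\<Sum>j<m. expectation (\<lambda>x. W j x * W j x))"
    proof (rule sum.cong[OF refl])
      fix j assume j: "j \<in> {..<m}"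
      have "(\<Sum>k<m. expectation (\<lambda>x. W j x * W k x)) = (\<Sum>k\<in>{j}. expectation (\<lambda>x. W j x * W k x))"
        by (rule sum.mono_neutral_right) (use j cross in auto)
      thus "(\<Sum>k<m. expectation (\<lambda>x. W j x * W k x)) = expectation (\<lambda>x. W j x * W j x)" by simp
    qed
    also have "\<dots> \<le> (\<Sum>j<m. V)"
      by (rule sum_mono) (use var in \<open>auto simp: W_def power2_eq_square\<close>)
    finally show ?thesis by simp
  qed
  define f where "f i x = (\<Sum>j<8^i. Z j x) / 8^i" for i x
  define A where "A i = {x\<in>space M. (1/2)^i \<le> \<bar>f i x - \<mu>\<bar>}" for i :: nat
  have fmu: "f i x - \<mu> = (\<Sum>j<8^i. W j x) / 8^i" for i x
    by (simp add: f_def W_def sum_subtractf field_simps)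
  have Af: "expectation (f i) = \<mu>" for i
    unfolding f_def[abs_def] using intZ mean by (simp add: integral_sum)
  have "0 \<le> expectation (\<lambda>x. (Z 0 x - \<mu>)^2)" by (rule integral_nonneg_AE) auto
  then have V0: "0 \<le> V" using var[of 0] by linarith
  have fm[measurable]: "f i \<in> borel_measurable M" for i unfolding f_def[abs_def] by measurable
  have ar: "(8::real)^i / ((8^i)^2 * ((1/2)^i)^2) = (1/2)^i" for i :: nat
  proof -
    have "(8^i)^2 * ((1/2)^i)^2 = (16::real)^i" by (simp flip: power_mult_distrib power_mult power_mult_distrib add: power2_eq_square)
    moreover have "(8::real)^i / 16^i = (1/2)^i" by (simp flip: power_divide)
    ultimately show ?thesis by simp
  qed
  have PA: "prob (A i) \<le> V * (1/2)^i" for i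
  proof -
    have fI: "integrable M (\<lambda>x. (f i x)^2)"
    proof -
      have "(\<lambda>x. (f i x)^2) = (\<lambda>x. ((\<Sum>j<8^i. W j x) / 8^i)^2 + 2*\<mu>*f i x - \<mu>^2)"
        by (rule ext) (simp only: fmu[symmetric], simp add: power2_eq_square algebra_simps)
      moreover have "integrable M (\<lambda>x. ((\<Sum>j<8^i. W j x))^2)"
        using prodI by (simp add: power2_eq_square sum_product)
      moreover have "integrable M (f i)" unfolding f_def[abs_def] using intZ by simp
      ultimately show ?thesis by (simp add: power_divide)
    qed
    have "prob (A i) \<le> variance (f i) / ((1/2)^i)^2"
      using Chebyshev_inequality[OF fm fI, of "(1/2)^i"] Af unfolding A_def by simp
    also have "variance (f i) = expectation (\<lambda>x. (\<Sum>j<8^i. W j x)^2 / (8^i)^2)"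
      by (simp only: Af fmu power_divide)
    also have "\<dots> = expectation (\<lambda>x. (\<Sum>j<8^i. W j x)^2) / (8^i)^2"
      by (rule integral_divide_zero)
    also have "\<dots> / ((1/2)^i)^2 \<le> (real (8^i) * V) / (8^i)^2 / ((1/2)^i)^2"
      by (intro divide_right_mono ES) auto
    also have "\<dots> = V * ((8::real)^i / ((8^i)^2 * ((1/2)^i)^2))"
      by simp
    also have "\<dots> = V * (1/2)^i" by (simp only: ar)
    finally show ?thesis .
  qed
  have Am[measurable]: "A i \<in> sets M" for i unfolding A_def f_def by measurable
  have "summable (\<lambda>i. measure M (A i))"
    by (rule summable_comparison_test'[where g="\<lambda>i. V * (1/2)^i"]) (use PA in \<open>auto intro: summable_mult summable_geometric\<close>)
  then have "AE x in M. eventually (\<lambda>i. x \<in> space M - A i) sequentially"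
    by (intro borel_cantelli_AE1) (auto simp: emeasure_finite less_top[symmetric])
  then show ?thesis
  proof (rule AE_mp, intro AE_I2 impI)
    fix x assume "x \<in> space M" and ev: "eventually (\<lambda>i. x \<in> space M - A i) sequentially"
    have "eventually (\<lambda>i. norm (f i x - \<mu>) \<le> (1/2)^i) sequentially"
      using ev by eventually_elim (auto simp: A_def)
    moreover have "(\<lambda>i. (1/2::real)^i) \<longlonglongrightarrow> 0" by (rule LIMSEQ_realpow_zero) auto
    ultimately have "(\<lambda>i. f i x - \<mu>) \<longlonglongrightarrow> 0" by (rule Lim_null_comparison)
    thus "(\<lambda>i. (\<Sum>j<8^i. Z j x) / 8^i) \<longlonglongrightarrow> \<mu>" unfolding f_def by (simp add: LIM_zero_iff)
  qed
qed

lemma matrix_inv_props: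
  fixes A :: "real^'n^'n"
  assumes "invertible A"
  shows "A ** matrix_inv A = mat 1" "matrix_inv A ** A = mat 1"
proof -
  have "\<exists>A'. A ** A' = mat 1 \<and> A' ** A = mat 1" using assms unfolding invertible_def by blast
  from someI_ex[OF this] show "A ** matrix_inv A = mat 1" "matrix_inv A ** A = mat 1"
    unfolding matrix_inv_def by auto
qed

lemma Phi_diff: "Phi phi n (v - w) x = Phi phi n v x - Phi phi n w x"
  by (simp add: Phi_def algebra_simps sum_subtractf)

lemma Phi_bound:
  assumes "\<And>k x n. \<bar>phi k x n\<bar> \<le> B"
  shows "\<bar>Phi phi n v x\<bar> \<le> B * (\<Sum>k\<in>UNIV. \<bar>v $ k\<bar>)"
proof -
  have "\<bar>Phi phi n v x\<bar> \<le> (\<Sum>k\<in>UNIV. \<bar>v $ k * phi k x n\<bar>)" unfolding Phi_def by (rule sum_abs)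
  also have "\<dots> \<le> (\<Sum>k\<in>UNIV. \<bar>v $ k\<bar> * B)"
    by (rule sum_mono) (simp add: abs_mult assms mult_left_mono)
  finally show ?thesis by (simp add: sum_distrib_left mult.commute)
qed

lemma abs_le_sq1: "\<bar>x::real\<bar> \<le> x^2 + 1"
proof -
  have "0 \<le> (\<bar>x\<bar> - 1)^2" by simp
  hence "2 * \<bar>x\<bar> \<le> \<bar>x\<bar> * \<bar>x\<bar> + 1" by (simp add: power2_eq_square algebra_simps)
  thus ?thesis by (simp add: power2_eq_square)
qed

locale lsq = finite_measure mu for mu :: "'a measure" +
  fixes U V :: "nat \<Rightarrow> 'a \<Rightarrow> real^'d" and N :: nat
    and phi :: "'k::finite \<Rightarrow> real^'d \<Rightarrow> nat \<Rightarrow> real" and g :: "real^'d \<Rightarrow> real"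
    and alpha :: real and B :: real
  assumes Um[measurable]: "\<And>n. U n \<in> borel_measurable mu"
    and Vm[measurable]: "\<And>n. V n \<in> borel_measurable mu"
    and phim[measurable]: "\<And>k n. (\<lambda>x. phi k x n) \<in> borel_measurable borel"
    and phiB: "\<And>k x n. \<bar>phi k x n\<bar> \<le> B"
    and gm[measurable]: "g \<in> borel_measurable borel"
    and gsq: "\<And>n. n < N \<Longrightarrow> integrable mu (\<lambda>\<omega>. (g (V n \<omega>))^2)"
    and shift: "\<And>n. Suc n < N \<Longrightarrow> V n = U (Suc n)"
    and alpha: "0 \<le> alpha"
begin

definition Gm :: "real^'k^'k" where
  "Gm = (\<chi> i l. \<Sum>n<N. \<integral>\<omega>. phi i (U n \<omega>) n * phi l (U n \<omega>) n \<partial>mu)"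
definition bv :: "real^'k \<Rightarrow> real^'k" where
  "bv \<theta> = (\<chi> i. \<Sum>n<N. \<integral>\<omega>. phi i (U n \<omega>) n * target phi g N n \<theta> (V n \<omega>) \<partial>mu)"
definition T :: "real^'k \<Rightarrow> real^'k" where
  "T \<theta> = alpha *\<^sub>R (matrix_inv Gm *v bv \<theta>)"
definition q :: "real^'k \<Rightarrow> real" where
  "q v = v \<bullet> (Gm *v v)"

lemma Phi_meas[measurable]: "(\<lambda>x. Phi phi n v x) \<in> borel_measurable borel"
  unfolding Phi_def by measurable

lemma target_meas[measurable]: "(\<lambda>x. target phi g N n v x) \<in> borel_measurable borel"
  unfolding target_def by measurable

lemma B0: "0 \<le> B" using phiB[of undefined undefined 0] by linarith

lemma int_bounded:
  fixes f :: "'a \<Rightarrow> real"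
  assumes "f \<in> borel_measurable mu" "\<And>x. \<bar>f x\<bar> \<le> C"
  shows "integrable mu f"
  by (rule integrable_const_bound[where B=C]) (use assms in auto)

lemma int_pp: "integrable mu (\<lambda>\<omega>. phi i (U n \<omega>) n * phi l (U m \<omega>) m)"
proof (rule int_bounded)
  show "(\<lambda>\<omega>. phi i (U n \<omega>) n * phi l (U m \<omega>) m) \<in> borel_measurable mu" by measurable
  fix x show "\<bar>phi i (U n x) n * phi l (U m x) m\<bar> \<le> B * B"
    unfolding abs_mult by (intro mult_mono phiB) (auto simp: B0)
qed

lemma int_PhiPhi: "integrable mu (\<lambda>\<omega>. Phi phi n v (W \<omega>) * Phi phi m w (W' \<omega>))"
  if [measurable]: "W \<in> borel_measurable mu" "W' \<in> borel_measurable mu"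
proof (rule int_bounded)
  show "(\<lambda>\<omega>. Phi phi n v (W \<omega>) * Phi phi m w (W' \<omega>)) \<in> borel_measurable mu" by measurable
  fix x show "\<bar>Phi phi n v (W x) * Phi phi m w (W' x)\<bar> \<le> (B * (\<Sum>k\<in>UNIV. \<bar>v $ k\<bar>)) * (B * (\<Sum>k\<in>UNIV. \<bar>w $ k\<bar>))"
    unfolding abs_mult by (intro mult_mono Phi_bound phiB) (auto simp: B0)
qed

lemma int_pt:
  assumes "n < N"
  shows "integrable mu (\<lambda>\<omega>. phi i (U n \<omega>) n * target phi g N n \<theta> (V n \<omega>))"
proof (rule Bochner_Integration.integrable_bound)
  define C where "C = B * (\<Sum>k\<in>UNIV. \<bar>\<theta> $ k\<bar>)"
  show "integrable mu (\<lambda>\<omega>. B * ((g (V n \<omega>))^2 + 1 + C))"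
    using gsq[OF assms] by simp
  show "(\<lambda>\<omega>. phi i (U n \<omega>) n * target phi g N n \<theta> (V n \<omega>)) \<in> borel_measurable mu" by measurable
  show "AE \<omega> in mu. norm (phi i (U n \<omega>) n * target phi g N n \<theta> (V n \<omega>)) \<le> norm (B * ((g (V n \<omega>))^2 + 1 + C))"
  proof (intro AE_I2)
    fix \<omega>
    have t: "\<bar>target phi g N n \<theta> (V n \<omega>)\<bar> \<le> (g (V n \<omega>))^2 + 1 + C"
    proof -
      have "\<bar>g (V n \<omega>)\<bar> \<le> (g (V n \<omega>))^2 + 1"
        by (rule abs_le_sq1)
      moreover have "\<bar>Phi phi (Suc n) \<theta> (V n \<omega>)\<bar> \<le> C" unfolding C_def by (rule Phi_bound[OF phiB])
      moreover have "0 \<le> C" unfolding C_def using B0 by simp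
      ultimately show ?thesis unfolding target_def by (auto simp: max_def)
    qed
    have "0 \<le> (g (V n \<omega>))^2 + 1 + C" using t by linarith
    then show "norm (phi i (U n \<omega>) n * target phi g N n \<theta> (V n \<omega>)) \<le> norm (B * ((g (V n \<omega>))^2 + 1 + C))"
      using B0 unfolding real_norm_def abs_mult by (auto intro!: mult_mono phiB t)
  qed
qed


lemma int_PhiU: "integrable mu (\<lambda>\<omega>. v $ i * phi i (U n \<omega>) n * (v $ l * phi l (U n \<omega>) n))"
proof -
  have "integrable mu (\<lambda>\<omega>. (v $ i * v $ l) * (phi i (U n \<omega>) n * phi l (U n \<omega>) n))"
    using int_pp by simp
  thus ?thesis by (simp add: mult_ac)
qed

lemma q_eq: "q v = (\<Sum>n<N. \<integral>\<omega>. (Phi phi n v (U n \<omega>))^2 \<partial>mu)"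
proof -
  have "(\<Sum>n<N. \<integral>\<omega>. (Phi phi n v (U n \<omega>))^2 \<partial>mu)
      = (\<Sum>n<N. \<integral>\<omega>. (\<Sum>i\<in>UNIV. \<Sum>l\<in>UNIV. (v $ i * phi i (U n \<omega>) n) * (v $ l * phi l (U n \<omega>) n)) \<partial>mu)"
    by (simp add: Phi_def power2_eq_square sum_product)
  also have "\<dots> = (\<Sum>n<N. \<Sum>i\<in>UNIV. \<Sum>l\<in>UNIV. \<integral>\<omega>. (v $ i * phi i (U n \<omega>) n) * (v $ l * phi l (U n \<omega>) n) \<partial>mu)"
    by (simp add: integral_sum int_PhiU)
  also have "\<dots> = (\<Sum>n<N. \<Sum>i\<in>UNIV. \<Sum>l\<in>UNIV. v $ i * (v $ l * \<integral>\<omega>. phi i (U n \<omega>) n * phi l (U n \<omega>) n \<partial>mu))"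
  proof -
    have "(\<integral>\<omega>. (v $ i * phi i (U n \<omega>) n) * (v $ l * phi l (U n \<omega>) n) \<partial>mu)
        = v $ i * (v $ l * \<integral>\<omega>. phi i (U n \<omega>) n * phi l (U n \<omega>) n \<partial>mu)" for n i l
    proof -
      have "(\<integral>\<omega>. (v $ i * phi i (U n \<omega>) n) * (v $ l * phi l (U n \<omega>) n) \<partial>mu)
         = (\<integral>\<omega>. (v $ i * v $ l) * (phi i (U n \<omega>) n * phi l (U n \<omega>) n) \<partial>mu)"
        by (simp add: mult_ac)
      also have "\<dots> = (v $ i * v $ l) * \<integral>\<omega>. phi i (U n \<omega>) n * phi l (U n \<omega>) n \<partial>mu"
        by (rule integral_mult_right_zero)
      finally show ?thesis by simp
    qed
    thus ?thesis by simp
  qed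
  also have "\<dots> = (\<Sum>i\<in>UNIV. \<Sum>n<N. \<Sum>l\<in>UNIV. v $ i * (v $ l * \<integral>\<omega>. phi i (U n \<omega>) n * phi l (U n \<omega>) n \<partial>mu))"
    by (rule sum.swap)
  also have "\<dots> = (\<Sum>i\<in>UNIV. \<Sum>l\<in>UNIV. \<Sum>n<N. v $ i * (v $ l * \<integral>\<omega>. phi i (U n \<omega>) n * phi l (U n \<omega>) n \<partial>mu))"
    by (rule sum.cong[OF refl], rule sum.swap)
  also have "\<dots> = (\<Sum>i\<in>UNIV. v $ i * (\<Sum>l\<in>UNIV. Gm $ i $ l * v $ l))"
    unfolding Gm_def by (simp add: sum_distrib_left sum_distrib_right mult_ac)
  also have "\<dots> = q v" by (simp add: q_def inner_vec_def matrix_vector_mult_def)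
  finally show ?thesis by simp
qed

lemma q_nonneg: "0 \<le> q v"
  unfolding q_eq by (intro sum_nonneg integral_nonneg_AE) auto

lemma max_lip: "\<bar>max (a::real) b - max a c\<bar> \<le> \<bar>b - c\<bar>"
  by (auto simp: max_def)

lemma sum_shift_le:
  fixes h :: "nat \<Rightarrow> real"
  assumes "\<And>n. 0 \<le> h n"
  shows "(\<Sum>n<N. if Suc n = N then 0 else h (Suc n)) \<le> (\<Sum>n<N. h n)"
proof (cases N)
  case 0 thus ?thesis by simp
next
  case (Suc M)
  have "(\<Sum>n<N. if Suc n = N then 0 else h (Suc n)) = (\<Sum>n<M. h (Suc n))"
    unfolding Suc by (simp add: sum.lessThan_Suc)
  also have "\<dots> \<le> h 0 + (\<Sum>n<M. h (Suc n))" using assms by simp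
  also have "\<dots> = (\<Sum>n<N. h n)" unfolding Suc by (rule sum.lessThan_Suc_shift[symmetric])
  finally show ?thesis .
qed

lemma contraction:
  assumes inv: "invertible Gm"
  shows "q (T \<theta> - T \<theta>') \<le> alpha^2 * q (\<theta> - \<theta>')"
proof -
  define v where "v = T \<theta> - T \<theta>'"
  define D where "D n \<omega> = target phi g N n \<theta> (V n \<omega>) - target phi g N n \<theta>' (V n \<omega>)" for n \<omega>
  have Dm[measurable]: "D n \<in> borel_measurable mu" for n unfolding D_def by measurable
  have Dle: "\<bar>D n \<omega>\<bar> \<le> (if Suc n = N then 0 else \<bar>Phi phi (Suc n) (\<theta> - \<theta>') (V n \<omega>)\<bar>)" for n \<omega>
    unfolding D_def target_def Phi_diff using max_lip by auto
  define Cd where "Cd = B * (\<Sum>k\<in>UNIV. \<bar>(\<theta> - \<theta>') $ k\<bar>)"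
  have Cd0: "0 \<le> Cd" unfolding Cd_def using B0 by (simp add: sum_nonneg)
  have Dbd: "\<bar>D n \<omega>\<bar> \<le> Cd" for n \<omega>
  proof -
    have "\<bar>Phi phi (Suc n) (\<theta> - \<theta>') (V n \<omega>)\<bar> \<le> B * (\<Sum>k\<in>UNIV. \<bar>(\<theta> - \<theta>') $ k\<bar>)"
      by (rule Phi_bound[OF phiB])
    moreover have "0 \<le> B * (\<Sum>k\<in>UNIV. \<bar>(\<theta> - \<theta>') $ k\<bar>)" using B0 by (simp add: sum_nonneg)
    ultimately show ?thesis using Dle[of n \<omega>] unfolding Cd_def by (auto split: if_splits)
  qed
  have intD: "integrable mu (\<lambda>\<omega>. (D n \<omega>)^2)" for n
  proof (rule int_bounded[where C="Cd^2"])
    fix x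
    have "\<bar>D n x\<bar>^2 \<le> Cd^2"
      by (rule power_mono[OF Dbd]) simp
    thus "\<bar>(D n x)^2\<bar> \<le> Cd^2" by simp
  qed simp
  have intPD: "integrable mu (\<lambda>\<omega>. c * phi i (U n \<omega>) n * D n \<omega>)" for c i n
    by (rule int_bounded[where C="\<bar>c\<bar> * B * Cd"])
       (auto simp: abs_mult B0 Cd0 intro!: mult_mono phiB Dbd)
  have intPD': "integrable mu (\<lambda>\<omega>. Phi phi n w (U n \<omega>) * D n \<omega>)" for w n
    unfolding Phi_def sum_distrib_right using intPD by simp
  have intP2: "integrable mu (\<lambda>\<omega>. (Phi phi n w (U n \<omega>))^2)" for w n
  proof -
    have "integrable mu (\<lambda>\<omega>. Phi phi n w (U n \<omega>) * Phi phi n w (U n \<omega>))"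
      by (rule int_PhiPhi) (rule Um)+
    thus ?thesis by (simp add: power2_eq_square)
  qed
  have Gv: "Gm *v v = alpha *\<^sub>R (bv \<theta> - bv \<theta>')"
    unfolding v_def T_def using matrix_inv_props[OF inv]
    by (simp add: algebra_simps matrix_vector_mul_assoc)
  have bd: "bv \<theta> - bv \<theta>' = (\<chi> i. \<Sum>n<N. \<integral>\<omega>. phi i (U n \<omega>) n * D n \<omega> \<partial>mu)"
  proof -
    have "(\<integral>\<omega>. phi i (U n \<omega>) n * target phi g N n \<theta> (V n \<omega>) \<partial>mu) - (\<integral>\<omega>. phi i (U n \<omega>) n * target phi g N n \<theta>' (V n \<omega>) \<partial>mu)
       = (\<integral>\<omega>. phi i (U n \<omega>) n * D n \<omega> \<partial>mu)" if "n < N" for i n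
      unfolding D_def right_diff_distrib by (simp add: integral_diff int_pt[OF that])
    thus ?thesis by (simp add: bv_def vec_eq_iff sum_subtractf[symmetric])
  qed
  have qv: "q v = alpha * (\<Sum>n<N. \<integral>\<omega>. Phi phi n v (U n \<omega>) * D n \<omega> \<partial>mu)"
  proof -
    have "q v = alpha * (\<Sum>i\<in>UNIV. v $ i * (\<Sum>n<N. \<integral>\<omega>. phi i (U n \<omega>) n * D n \<omega> \<partial>mu))"
      unfolding q_def Gv bd by (simp add: inner_vec_def sum_distrib_left mult_ac)
    also have "\<dots> = alpha * (\<Sum>n<N. \<Sum>i\<in>UNIV. \<integral>\<omega>. v $ i * phi i (U n \<omega>) n * D n \<omega> \<partial>mu)"
      by (simp add: sum_distrib_left mult.assoc sum.swap[of _ UNIV])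
    also have "\<dots> = alpha * (\<Sum>n<N. \<integral>\<omega>. Phi phi n v (U n \<omega>) * D n \<omega> \<partial>mu)"
      by (simp add: integral_sum[symmetric] intPD Phi_def sum_distrib_right)
    finally show ?thesis .
  qed
  have pw: "alpha * (a * d) \<le> a^2 / 2 + alpha^2 * d^2 / 2" for a d :: real
  proof -
    have "0 \<le> (a - alpha * d)^2" by simp
    thus ?thesis by (simp add: power2_eq_square algebra_simps)
  qed
  have "q v \<le> (\<Sum>n<N. \<integral>\<omega>. (Phi phi n v (U n \<omega>))^2 / 2 + alpha^2 * (D n \<omega>)^2 / 2 \<partial>mu)"
    unfolding qv sum_distrib_left
  proof (rule sum_mono)
    fix n
    have "alpha * (\<integral>\<omega>. Phi phi n v (U n \<omega>) * D n \<omega> \<partial>mu) = (\<integral>\<omega>. alpha * (Phi phi n v (U n \<omega>) * D n \<omega>) \<partial>mu)"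
      by simp
    also have "\<dots> \<le> (\<integral>\<omega>. (Phi phi n v (U n \<omega>))^2 / 2 + alpha^2 * (D n \<omega>)^2 / 2 \<partial>mu)"
      by (rule integral_mono) (use intPD' intP2 intD pw in auto)
    finally show "alpha * (\<integral>\<omega>. Phi phi n v (U n \<omega>) * D n \<omega> \<partial>mu) \<le> \<dots>" .
  qed
  also have "\<dots> = q v / 2 + alpha^2 / 2 * (\<Sum>n<N. \<integral>\<omega>. (D n \<omega>)^2 \<partial>mu)"
    unfolding q_eq using intP2 intD by (simp add: integral_add sum.distrib sum_divide_distrib sum_distrib_left)
  finally have qv2: "q v \<le> alpha^2 * (\<Sum>n<N. \<integral>\<omega>. (D n \<omega>)^2 \<partial>mu)" by simp
  have "(\<Sum>n<N. \<integral>\<omega>. (D n \<omega>)^2 \<partial>mu)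
      \<le> (\<Sum>n<N. if Suc n = N then 0 else \<integral>\<omega>. (Phi phi (Suc n) (\<theta> - \<theta>') (U (Suc n) \<omega>))^2 \<partial>mu)"
  proof (rule sum_mono)
    fix n assume n: "n \<in> {..<N}"
    show "(\<integral>\<omega>. (D n \<omega>)^2 \<partial>mu) \<le> (if Suc n = N then 0 else \<integral>\<omega>. (Phi phi (Suc n) (\<theta> - \<theta>') (U (Suc n) \<omega>))^2 \<partial>mu)"
    proof (cases "Suc n = N")
      case True
      then have "D n \<omega> = 0" for \<omega> using Dle[of n \<omega>] by simp
      then show ?thesis using True by simp
    next
      case False
      then have sh: "V n = U (Suc n)" using n shift by simp
      have "(\<integral>\<omega>. (D n \<omega>)^2 \<partial>mu) \<le> (\<integral>\<omega>. (Phi phi (Suc n) (\<theta> - \<theta>') (U (Suc n) \<omega>))^2 \<partial>mu)"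
        by (rule integral_mono) (use intD intP2 Dle[of n] False sh in \<open>auto simp: abs_le_square_iff[symmetric]\<close>)
      then show ?thesis using False by simp
    qed
  qed
  also have "\<dots> \<le> q (\<theta> - \<theta>')"
    unfolding q_eq by (rule sum_shift_le) (auto intro: integral_nonneg_AE)
  finally show ?thesis using qv2 unfolding v_def
    by (meson alpha mult_left_mono order_trans zero_le_power2)
qed
end

definition qf :: "real^'n^'n \<Rightarrow> real^'n \<Rightarrow> real" where
  "qf A v = v \<bullet> (A *v v)"

definition msum :: "real^'n^'n \<Rightarrow> real" where
  "msum A = (\<Sum>i\<in>UNIV. \<Sum>j\<in>UNIV. \<bar>A $ i $ j\<bar>)"

definition symm :: "real^'n^'n \<Rightarrow> bool" where
  "symm A \<longleftrightarrow> (\<forall>i j. A $ i $ j = A $ j $ i)"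

lemma inner_mv_eq: "v \<bullet> (A *v w) = (\<Sum>i\<in>UNIV. \<Sum>j\<in>UNIV. v $ i * A $ i $ j * w $ j)"
  by (simp add: inner_vec_def matrix_vector_mult_def sum_distrib_left mult_ac)

lemma symm_swap: "symm A \<Longrightarrow> v \<bullet> (A *v w) = w \<bullet> (A *v v)"
  unfolding inner_mv_eq symm_def
  by (subst sum.swap) (simp add: mult_ac)

lemma qf_add: "symm A \<Longrightarrow> qf A (a + b) = qf A a + 2 * (a \<bullet> (A *v b)) + qf A b"
  unfolding qf_def by (simp add: matrix_vector_right_distrib inner_add_left inner_add_right symm_swap[of A b a])

lemma qf_scale: "qf A (c *\<^sub>R v) = c^2 * qf A v"
  unfolding qf_def by (simp add: matrix_vector_mult_scaleR power2_eq_square)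

lemma qf_scaleM: "qf (c *\<^sub>R A) v = c * qf A v"
  unfolding qf_def inner_mv_eq by (simp add: sum_distrib_left mult_ac)

lemma mv_neg: "A *v (- b) = - (A *v (b::real^'n))"
  using matrix_vector_mult_diff_distrib[of A 0 b] by simp

lemma qf_bound: "\<bar>qf A v\<bar> \<le> msum A * (norm v)^2"
proof -
  have "\<bar>qf A v\<bar> \<le> (\<Sum>i\<in>UNIV. \<Sum>j\<in>UNIV. \<bar>v $ i * A $ i $ j * v $ j\<bar>)"
    unfolding qf_def inner_mv_eq by (rule order_trans[OF sum_abs sum_mono[OF sum_abs]])
  also have "\<dots> \<le> (\<Sum>i\<in>UNIV. \<Sum>j\<in>UNIV. \<bar>A $ i $ j\<bar> * (norm v)^2)"
  proof (intro sum_mono)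
    fix i j
    have "\<bar>v $ i\<bar> * \<bar>v $ j\<bar> \<le> norm v * norm v"
      by (intro mult_mono component_le_norm_cart) auto
    then show "\<bar>v $ i * A $ i $ j * v $ j\<bar> \<le> \<bar>A $ i $ j\<bar> * (norm v)^2"
      by (simp add: abs_mult power2_eq_square mult_left_mono mult_ac
          mult_left_mono[of "\<bar>v $ i\<bar> * \<bar>v $ j\<bar>" "norm v * norm v" "\<bar>A $ i $ j\<bar>", simplified mult_ac])
  qed
  finally show ?thesis by (simp add: msum_def sum_distrib_right)
qed

lemma cross_bound:
  assumes "symm A" "\<And>v. 0 \<le> qf A v" "0 < e"
  shows "2 * (a \<bullet> (A *v b)) \<le> e * qf A a + qf A b / e"
proof -
  have "0 \<le> qf A (e *\<^sub>R a + (- b))" by (rule assms(2))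
  also have "\<dots> = e^2 * qf A a - 2 * e * (a \<bullet> (A *v b)) + qf A b"
    using qf_add[OF assms(1), of "e *\<^sub>R a" "- b"] qf_scale[of A e a] qf_scale[of A "-1" b]
    by (simp add: matrix_vector_mult_scaleR mv_neg)
  finally have "2 * e * (a \<bullet> (A *v b)) \<le> e^2 * qf A a + qf A b" by simp
  then have "e * (2 * (a \<bullet> (A *v b))) \<le> e * (e * qf A a + qf A b / e)"
    using assms(3) by (simp add: power2_eq_square algebra_simps)
  then show ?thesis using assms(3) by (simp add: mult_le_cancel_left_pos)
qed

lemma qf_add_le:
  assumes "symm A" "\<And>v. 0 \<le> qf A v" "0 < e"
  shows "qf A (a + b) \<le> (1 + e) * qf A a + (1 + 1/e) * qf A b"
  using qf_add[OF assms(1), of a b] cross_bound[OF assms, of a b]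
  by (simp add: algebra_simps)

lemma qf_zero:
  assumes "symm A" "\<And>v. 0 \<le> qf A v" "invertible A" "qf A v = 0"
  shows "v = 0"
proof -
  define w where "w = A *v v"
  define s where "s = w \<bullet> (A *v v)"
  define c where "c = qf A w"
  have c0: "0 \<le> c" unfolding c_def by (rule assms(2))
  have "0 \<le> qf A ((c + 1) *\<^sub>R v + (- s) *\<^sub>R w)" by (rule assms(2))
  also have "\<dots> = qf A ((c + 1) *\<^sub>R v) + 2 * (((c + 1) *\<^sub>R v) \<bullet> (A *v ((- s) *\<^sub>R w))) + qf A ((- s) *\<^sub>R w)"
    by (rule qf_add[OF assms(1)])
  also have "qf A ((c + 1) *\<^sub>R v) = 0" using assms(4) qf_scale[of A "c + 1" v] by simp
  also have "qf A ((- s) *\<^sub>R w) = s^2 * c" using qf_scale[of A "- s" w] unfolding c_def by simp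
  also have "((c + 1) *\<^sub>R v) \<bullet> (A *v ((- s) *\<^sub>R w)) = (c + 1) * (- s) * (v \<bullet> (A *v w))"
    by (simp add: matrix_vector_mult_scaleR mv_neg)
  also have "v \<bullet> (A *v w) = s" using symm_swap[OF assms(1), of v w] unfolding s_def by simp
  also have "0 + 2 * ((c + 1) * - s * s) + s\<^sup>2 * c = - (s^2 * (c + 2))"
    by (simp add: power2_eq_square algebra_simps)
  finally have "s^2 * (c + 2) \<le> 0" by simp
  moreover have "0 \<le> s^2 * (c + 2)" using c0 by simp
  ultimately have "s^2 * (c + 2) = 0" by linarith
  moreover have "c + 2 \<noteq> 0" using c0 by simp
  ultimately have "s = 0" by simp
  then have "w = 0" unfolding s_def w_def by simp
  then show "v = 0" using inj_matrix_vector_mult[OF assms(3)] unfolding w_def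
    by (metis injD matrix_vector_mult_0_right)
qed

lemma qf_cont: "continuous_on S (qf A)"
proof -
  have "qf A = (\<lambda>v. \<Sum>i\<in>UNIV. \<Sum>j\<in>UNIV. v $ i * A $ i $ j * v $ j)"
    by (rule ext) (simp add: qf_def inner_mv_eq)
  then show ?thesis by (simp, intro continuous_intros)
qed

lemma pd_bound:
  fixes A :: "real^'n^'n"
  assumes "symm A" "\<And>v. 0 \<le> qf A v" "invertible A"
  shows "\<exists>lam>0. \<forall>v. lam * (norm v)^2 \<le> qf A v"
proof -
  have ne: "sphere (0::real^'n) 1 \<noteq> {}"
    using vector_choose_size[of 1] by auto
  obtain u where u: "u \<in> sphere 0 1" and umin: "\<forall>y\<in>sphere 0 1. qf A u \<le> qf A y"
    using continuous_attains_inf[OF compact_sphere ne qf_cont] by blast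
  have "u \<noteq> 0" using u by auto
  then have pos: "0 < qf A u" using qf_zero[OF assms] assms(2)[of u] by force
  have "qf A u * (norm v)^2 \<le> qf A v" for v
  proof (cases "v = 0")
    case True then show ?thesis by (simp add: qf_def)
  next
    case False
    define y where "y = (1 / norm v) *\<^sub>R v"
    have "y \<in> sphere 0 1" using False unfolding y_def by simp
    then have "qf A u \<le> qf A y" using umin by blast
    moreover have "qf A v = (norm v)^2 * qf A y"
    proof -
      have "v = norm v *\<^sub>R y" using False unfolding y_def by simp
      then show ?thesis by (metis qf_scale)
    qed
    ultimately show ?thesis using mult_right_mono[of "qf A u" "qf A y" "(norm v)^2"] by (simp add: mult.commute)
  qed
  then show ?thesis using pos by blast
qed

lemma pd_invertible:
  fixes A :: "real^'n^'n"
  assumes "0 < lam" "\<And>v. lam * (norm v)^2 \<le> qf A v"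
  shows "invertible A"
proof -
  have "inj ((*v) A)"
  proof (rule injI)
    fix x y assume "A *v x = A *v y"
    then have "A *v (x - y) = 0" by (simp add: matrix_vector_mult_diff_distrib)
    then have "qf A (x - y) = 0" by (simp add: qf_def)
    then have "lam * (norm (x - y))^2 \<le> 0" using assms(2)[of "x - y"] by simp
    then show "x = y" using assms(1) by (simp add: mult_le_0_iff)
  qed
  then show ?thesis using matrix_left_invertible_injective invertible_left_inverse by blast
qed

lemma qf_diffM: "qf (A - B) v = qf A v - qf B v"
  unfolding qf_def by (simp add: matrix_vector_mult_diff_rdistrib inner_diff_right)

lemma geo_bound:
  fixes e :: "nat \<Rightarrow> real"
  assumes "\<And>k. e (Suc k) \<le> beta * e k + c" "0 \<le> beta" "beta < 1" "0 \<le> c"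
  shows "e k \<le> beta^k * e 0 + c / (1 - beta)"
proof (induction k)
  case 0 then show ?case using assms by simp
next
  case (Suc k)
  have "e (Suc k) \<le> beta * (beta^k * e 0 + c / (1 - beta)) + c"
    using assms(1)[of k] mult_left_mono[OF Suc assms(2)] by linarith
  also have "\<dots> = beta^Suc k * e 0 + c / (1 - beta)"
    using assms(3) by (simp add: field_simps)
  finally show ?case .
qed

lemma iter_conv:
  fixes H :: "nat \<Rightarrow> real^'n^'n" and G :: "real^'n^'n" and Ts :: "nat \<Rightarrow> real^'n \<Rightarrow> real^'n"
    and ts :: "real^'n"
  assumes lam: "0 < lam" "\<And>v. lam * (norm v)^2 \<le> qf G v"
    and Hconv: "H \<longlonglongrightarrow> G"
    and Hsym: "\<And>i. symm (H i)" and Hpsd: "\<And>i v. 0 \<le> qf (H i) v"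
    and contr: "\<And>i \<theta> \<theta>'. invertible (H i) \<Longrightarrow> qf (H i) (Ts i \<theta> - Ts i \<theta>') \<le> alpha^2 * qf (H i) (\<theta> - \<theta>')"
    and alpha: "0 \<le> alpha" "alpha < 1"
    and delta: "(\<lambda>i. H i *v (Ts i ts - ts)) \<longlonglongrightarrow> 0"
  shows "(\<lambda>i. (Ts i ^^ i) \<theta>0) \<longlonglongrightarrow> ts"
proof -
  have "(\<lambda>i. H i - G) \<longlonglongrightarrow> 0" using tendsto_diff[OF Hconv tendsto_const[of G]] by simp
  then have ent: "(\<lambda>i. (H i - G) $ a $ b) \<longlonglongrightarrow> 0" for a b
    using tendsto_vec_nth[OF tendsto_vec_nth, of "\<lambda>i. H i - G" 0 sequentially a b] by simp
  have "(\<lambda>i. msum (H i - G)) \<longlonglongrightarrow> 0"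
  proof -
    have "(\<lambda>i. \<Sum>a\<in>UNIV. \<Sum>b\<in>UNIV. \<bar>(H i - G) $ a $ b\<bar>) \<longlonglongrightarrow> (\<Sum>a\<in>(UNIV::'n set). \<Sum>b\<in>(UNIV::'n set). (0::real))"
      by (intro tendsto_sum tendsto_rabs_zero ent)
    then show ?thesis unfolding msum_def by simp
  qed
  then have "eventually (\<lambda>i. msum (H i - G) < lam / 2) sequentially"
    using lam(1) by (intro order_tendstoD(2)) auto
  then obtain i0 where i0: "\<And>i. i \<ge> i0 \<Longrightarrow> msum (H i - G) < lam / 2"
    unfolding eventually_sequentially by blast
  define CG where "CG = msum G"
  define C2 where "C2 = CG + lam / 2"
  have lowH: "lam / 2 * (norm v)^2 \<le> qf (H i) v" and upH: "qf (H i) v \<le> C2 * (norm v)^2"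
    if "i \<ge> i0" for i v
  proof -
    have e: "\<bar>qf (H i - G) v\<bar> \<le> lam / 2 * (norm v)^2"
      using qf_bound[of "H i - G" v] i0[OF that] by (meson less_imp_le mult_right_mono order_trans zero_le_power2)
    have q: "qf (H i) v = qf G v + qf (H i - G) v" by (simp add: qf_diffM)
    show "lam / 2 * (norm v)^2 \<le> qf (H i) v" using e q lam(2)[of v] by (simp add: abs_le_iff field_simps)
    have "qf G v \<le> CG * (norm v)^2" using qf_bound[of G v] unfolding CG_def by (simp add: abs_le_iff)
    then show "qf (H i) v \<le> C2 * (norm v)^2" using e q unfolding C2_def by (simp add: abs_le_iff algebra_simps)
  qed
  have invH: "invertible (H i)" if "i \<ge> i0" for i
    by (rule pd_invertible[of "lam / 2"]) (use lam(1) lowH[OF that] in auto)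
  define eps where "eps = 1 - alpha"
  define beta where "beta = (1 + eps) * alpha^2"
  define cc where "cc = 1 + 1 / eps"
  have eps0: "0 < eps" using alpha unfolding eps_def by simp
  have beta0: "0 \<le> beta" unfolding beta_def eps_def using alpha by simp
  have beta1: "beta < 1"
  proof -
    have "1 - beta = (1 - alpha) * (1 + alpha - alpha^2)"
      unfolding beta_def eps_def by (simp add: power2_eq_square algebra_simps)
    moreover have "0 < 1 + alpha - alpha^2" using alpha by (simp add: power2_eq_square) (smt (verit) mult_left_le_one_le)
    ultimately show ?thesis using alpha by (smt (verit) mult_pos_pos)
  qed
  have cc0: "0 \<le> cc" unfolding cc_def using eps0 by simp
  define dl where "dl i = Ts i ts - ts" for i
  define x where "x i = (Ts i ^^ i) \<theta>0" for i
  have main: "lam / 2 * (norm (x i - ts))^2 \<le> beta^i * (C2 * (norm (\<theta>0 - ts))^2) + cc * (C2 * (norm (dl i))^2) / (1 - beta)"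
    if "i \<ge> i0" for i
  proof -
    define e where "e k = qf (H i) ((Ts i ^^ k) \<theta>0 - ts)" for k
    have rec: "e (Suc k) \<le> beta * e k + cc * qf (H i) (dl i)" for k
    proof -
      have eq: "(Ts i ^^ Suc k) \<theta>0 - ts = (Ts i ((Ts i ^^ k) \<theta>0) - Ts i ts) + dl i"
        unfolding dl_def by simp
      have "e (Suc k) = qf (H i) ((Ts i ((Ts i ^^ k) \<theta>0) - Ts i ts) + dl i)"
        unfolding e_def eq by (rule refl)
      also have "\<dots> \<le> (1 + eps) * qf (H i) (Ts i ((Ts i ^^ k) \<theta>0) - Ts i ts) + cc * qf (H i) (dl i)"
        unfolding cc_def by (rule qf_add_le[OF Hsym Hpsd eps0])
      also have "\<dots> \<le> (1 + eps) * (alpha^2 * e k) + cc * qf (H i) (dl i)"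
        unfolding e_def using contr[OF invH[OF that]] eps0 by (intro add_right_mono mult_left_mono) auto
      finally show ?thesis unfolding beta_def by (simp add: mult_ac)
    qed
    have "e i \<le> beta^i * e 0 + cc * qf (H i) (dl i) / (1 - beta)"
      by (rule geo_bound[where e=e and beta=beta and c="cc * qf (H i) (dl i)", OF rec beta0 beta1]) (use cc0 Hpsd in simp)
    also have "\<dots> \<le> beta^i * (C2 * (norm (\<theta>0 - ts))^2) + cc * (C2 * (norm (dl i))^2) / (1 - beta)"
      unfolding e_def using beta0 beta1 cc0
      by (intro add_mono mult_left_mono divide_right_mono upH[OF that]) (auto intro!: upH[OF that])
    finally have "e i \<le> beta^i * (C2 * (norm (\<theta>0 - ts))^2) + cc * (C2 * (norm (dl i))^2) / (1 - beta)" .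
    then show ?thesis using lowH[OF that, of "x i - ts"] unfolding e_def x_def by linarith
  qed
  have dl_bound: "norm (dl i) \<le> (2 / lam) * norm (H i *v dl i)" if "i \<ge> i0" for i
  proof -
    have "lam / 2 * (norm (dl i))^2 \<le> norm (dl i) * norm (H i *v dl i)"
      using lowH[OF that, of "dl i"] norm_cauchy_schwarz[of "dl i" "H i *v dl i"] unfolding qf_def by linarith
    then have "lam / 2 * norm (dl i) \<le> norm (H i *v dl i)"
      by (cases "norm (dl i) = 0") (auto simp: power2_eq_square mult_le_cancel_right)
    then show ?thesis using lam(1) by (simp add: field_simps)
  qed
  have "(\<lambda>i. (2 / lam) * norm (H i *v dl i)) \<longlonglongrightarrow> 0"
    using delta unfolding dl_def by (intro tendsto_mult_right_zero tendsto_norm_zero)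
  then have "(\<lambda>i. dl i) \<longlonglongrightarrow> 0"
    by (rule Lim_null_comparison[rotated]) (use dl_bound in \<open>auto simp: eventually_sequentially\<close>)
  then have dl0: "(\<lambda>i. norm (dl i)) \<longlonglongrightarrow> 0" by (rule tendsto_norm_zero)
  have R0: "(\<lambda>i. (2 / lam) * (beta^i * (C2 * (norm (\<theta>0 - ts))^2) + cc * (C2 * (norm (dl i))^2) / (1 - beta))) \<longlonglongrightarrow> 0"
  proof -
    have "(\<lambda>i. beta^i) \<longlonglongrightarrow> 0" by (rule LIMSEQ_realpow_zero[OF beta0 beta1])
    moreover have "(\<lambda>i. (norm (dl i))^2) \<longlonglongrightarrow> 0" using tendsto_power[OF dl0, of 2] by simp
    ultimately have "(\<lambda>i. (2 / lam) * (beta^i * (C2 * (norm (\<theta>0 - ts))^2) + cc * (C2 * (norm (dl i))^2) / (1 - beta)))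
        \<longlonglongrightarrow> (2 / lam) * (0 * (C2 * (norm (\<theta>0 - ts))^2) + cc * (C2 * 0) / (1 - beta))"
      by (intro tendsto_mult tendsto_add tendsto_divide tendsto_const) (use beta1 in auto)
    then show ?thesis by simp
  qed
  have "(\<lambda>i. (norm (x i - ts))^2) \<longlonglongrightarrow> 0"
  proof (rule tendsto_sandwich[OF _ _ tendsto_const R0])
    show "eventually (\<lambda>i. 0 \<le> (norm (x i - ts))^2) sequentially" by simp
    show "eventually (\<lambda>i. (norm (x i - ts))^2 \<le> (2 / lam) * (beta^i * (C2 * (norm (\<theta>0 - ts))^2) + cc * (C2 * (norm (dl i))^2) / (1 - beta))) sequentially"
      unfolding eventually_sequentially
    proof (intro exI allI impI)
      fix i assume "i \<ge> i0"
      from main[OF this] show "(norm (x i - ts))^2 \<le> (2 / lam) * (beta^i * (C2 * (norm (\<theta>0 - ts))^2) + cc * (C2 * (norm (dl i))^2) / (1 - beta))"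
        using lam(1) by (simp add: field_simps)
    qed
  qed
  then have "(\<lambda>i. sqrt ((norm (x i - ts))^2)) \<longlonglongrightarrow> 0" using tendsto_real_sqrt by fastforce
  then have "(\<lambda>i. x i - ts) \<longlonglongrightarrow> 0" by (simp add: tendsto_norm_zero_iff)
  then show ?thesis unfolding x_def by (simp add: LIM_zero_iff)
qed

context lsq
begin

lemma q_qf: "q = qf Gm" by (rule ext) (simp add: q_def qf_def)

lemma Gm_symm: "symm Gm" unfolding symm_def Gm_def by (simp add: mult.commute)

lemma Gm_psd: "0 \<le> qf Gm v" using q_nonneg unfolding q_qf .

lemma contr_iter:
  assumes inv: "invertible Gm"
  shows "qf Gm ((T ^^ n) \<theta> - (T ^^ n) \<theta>') \<le> (alpha^2)^n * qf Gm (\<theta> - \<theta>')"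
proof (induction n)
  case 0 then show ?case by simp
next
  case (Suc n)
  have "qf Gm ((T ^^ Suc n) \<theta> - (T ^^ Suc n) \<theta>') \<le> alpha^2 * qf Gm ((T ^^ n) \<theta> - (T ^^ n) \<theta>')"
    using contraction[OF inv] unfolding q_qf by simp
  also have "\<dots> \<le> alpha^2 * ((alpha^2)^n * qf Gm (\<theta> - \<theta>'))"
    by (rule mult_left_mono[OF Suc]) simp
  finally show ?case by (simp add: mult_ac)
qed

lemma fixpoint:
  assumes inv: "invertible Gm" and a1: "alpha < 1"
  shows "\<exists>!\<theta>. T \<theta> = \<theta>"
proof -
  obtain lam where lam: "0 < lam" "\<And>v. lam * (norm v)^2 \<le> qf Gm v"
    using pd_bound[OF Gm_symm _ inv] Gm_psd by blast
  define C where "C = msum Gm + 1"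
  have C0: "0 < C" unfolding C_def using qf_bound[of Gm 0] by (simp add: msum_def sum_nonneg add_nonneg_pos)
  have upC: "qf Gm v \<le> C * (norm v)^2" for v
  proof -
    have "qf Gm v \<le> msum Gm * (norm v)^2" using qf_bound[of Gm v] by (simp add: abs_le_iff)
    moreover have "0 \<le> (norm v)^2" by simp
    ultimately show ?thesis unfolding C_def distrib_right mult_1 by linarith
  qed
  have "alpha * alpha \<le> alpha" by (rule mult_left_le_one_le) (use alpha a1 in auto)
  then have a2: "alpha^2 < 1" using a1 by (simp add: power2_eq_square)
  have "(\<lambda>n. (alpha^2)^n) \<longlonglongrightarrow> 0"
    by (rule LIMSEQ_realpow_zero) (use a2 in auto)
  then have "eventually (\<lambda>n. (alpha^2)^n < lam / (4 * C)) sequentially"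
    using lam(1) C0 by (intro order_tendstoD(2)) auto
  then obtain n where n: "(alpha^2)^n < lam / (4 * C)" by (auto simp: eventually_sequentially)
  have lip: "dist ((T ^^ n) x) ((T ^^ n) y) \<le> (1/2) * dist x y" for x y
  proof -
    have "lam * (norm ((T ^^ n) x - (T ^^ n) y))^2 \<le> (alpha^2)^n * qf Gm (x - y)"
      using lam(2) contr_iter[OF inv, of n x y] by (rule order_trans)
    also have "\<dots> \<le> lam / (4 * C) * (C * (norm (x - y))^2)"
      using n Gm_psd upC lam(1) C0 by (intro mult_mono) auto
    also have "\<dots> = lam * ((1/2) * norm (x - y))^2"
      using C0 by (simp add: power2_eq_square field_simps)
    finally have "lam * (norm ((T ^^ n) x - (T ^^ n) y))^2 \<le> lam * ((1/2) * norm (x - y))^2" .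
    then have "(norm ((T ^^ n) x - (T ^^ n) y))^2 \<le> ((1/2) * norm (x - y))^2"
      using lam(1) by (rule mult_left_le_imp_le)
    then show ?thesis unfolding dist_norm by (rule power2_le_imp_le) simp
  qed
  have "\<exists>!x. (T ^^ n) x = x"
    by (rule banach_fix_type[of "1/2"]) (use lip in simp_all)
  then obtain p where p: "(T ^^ n) p = p" and puniq: "\<And>z. (T ^^ n) z = z \<Longrightarrow> z = p"
    by (rule ex1E) blast
  have "(T ^^ n) (T p) = T p" by (metis funpow_swap1 p)
  then have Tp: "T p = p" using puniq by blast
  have uniq: "z = p" if "T z = z" for z
  proof -
    have "qf Gm (z - p) \<le> alpha^2 * qf Gm (z - p)"
      using contraction[OF inv, of z p] that Tp unfolding q_qf by simp
    moreover note a2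
    ultimately have "qf Gm (z - p) \<le> 0" using Gm_psd[of "z - p"]
      by (metis mult_le_cancel_right1 not_le order_less_le_trans)
    then have "qf Gm (z - p) = 0" using Gm_psd[of "z - p"] by simp
    then show "z = p" using qf_zero[OF Gm_symm _ inv] Gm_psd by force
  qed
  show ?thesis using Tp uniq by blast
qed

end

lemma ev_inv:
  fixes H :: "nat \<Rightarrow> real^'n^'n"
  assumes lam: "0 < lam" "\<And>v. lam * (norm v)^2 \<le> qf G v" and Hconv: "H \<longlonglongrightarrow> G"
  shows "eventually (\<lambda>i. invertible (H i)) sequentially"
proof -
  have "(\<lambda>i. H i - G) \<longlonglongrightarrow> 0" using tendsto_diff[OF Hconv tendsto_const[of G]] by simp
  then have ent: "(\<lambda>i. (H i - G) $ a $ b) \<longlonglongrightarrow> 0" for a b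
    using tendsto_vec_nth[OF tendsto_vec_nth, of "\<lambda>i. H i - G" 0 sequentially a b] by simp
  have "(\<lambda>i. msum (H i - G)) \<longlonglongrightarrow> 0"
  proof -
    have "(\<lambda>i. \<Sum>a\<in>UNIV. \<Sum>b\<in>UNIV. \<bar>(H i - G) $ a $ b\<bar>) \<longlonglongrightarrow> (\<Sum>a\<in>(UNIV::'n set). \<Sum>b\<in>(UNIV::'n set). (0::real))"
      by (intro tendsto_sum tendsto_rabs_zero ent)
    then show ?thesis unfolding msum_def by simp
  qed
  then have "eventually (\<lambda>i. msum (H i - G) < lam / 2) sequentially"
    using lam(1) by (intro order_tendstoD(2)) auto
  then show ?thesis
  proof (rule eventually_mono)
    fix i assume i: "msum (H i - G) < lam / 2"
    have "lam / 2 * (norm v)^2 \<le> qf (H i) v" for v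
    proof -
      have e: "\<bar>qf (H i - G) v\<bar> \<le> lam / 2 * (norm v)^2"
        using qf_bound[of "H i - G" v] i by (meson less_imp_le mult_right_mono order_trans zero_le_power2)
      have q: "qf (H i) v = qf G v + qf (H i - G) v" by (simp add: qf_diffM)
      show ?thesis using e q lam(2)[of v] by (simp add: abs_le_iff field_simps)
    qed
    then show "invertible (H i)" by (rule pd_invertible[rotated]) (use lam(1) in simp)
  qed
qed

lemma path_meas:
  assumes "\<And>n. n \<le> N \<Longrightarrow> Z n \<in> borel_measurable M"
  shows "path N Z \<in> measurable M (PiM {..N} (\<lambda>_. borel))"
  unfolding path_def[abs_def] by (rule measurable_restrict) (use assms in auto)

lemma lln_path:
  fixes M :: "'w measure" and X :: "nat \<Rightarrow> 'w \<Rightarrow> real^'d" and Y :: "nat \<Rightarrow> nat \<Rightarrow> 'w \<Rightarrow> real^'d"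
    and F :: "(nat \<Rightarrow> real^'d) \<Rightarrow> real"
  assumes P: "prob_space M"
    and Xm: "\<And>n. n \<le> N \<Longrightarrow> X n \<in> borel_measurable M"
    and Ym: "\<And>j n. n \<le> N \<Longrightarrow> Y j n \<in> borel_measurable M"
    and ind: "prob_space.indep_vars M (\<lambda>_. PiM {..N} (\<lambda>_. borel)) (\<lambda>j. path N (Y j)) UNIV"
    and dist: "\<And>j. distr M (PiM {..N} (\<lambda>_. borel)) (path N (Y j)) = distr M (PiM {..N} (\<lambda>_. borel)) (path N X)"
    and Fm[measurable]: "F \<in> borel_measurable (PiM {..N} (\<lambda>_. borel))"
    and Fsq: "integrable M (\<lambda>\<omega>. (F (path N X \<omega>))^2)"
  shows "AE \<omega> in M. (\<lambda>i. (\<Sum>j<8^i. F (path N (Y j) \<omega>)) / 8^i) \<longlonglongrightarrow> (\<integral>\<omega>. F (path N X \<omega>) \<partial>M)"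
proof -
  interpret prob_space M by (rule P)
  define PP where "PP = PiM {..N} (\<lambda>_. borel :: (real^'d) measure)"
  have pX[measurable]: "path N X \<in> measurable M PP" unfolding PP_def by (rule path_meas) (rule Xm)
  have pY[measurable]: "path N (Y j) \<in> measurable M PP" for j unfolding PP_def by (rule path_meas) (rule Ym)
  have FPm[measurable]: "F \<in> borel_measurable PP" unfolding PP_def by (rule Fm)
  define mu where "mu = (\<integral>\<omega>. F (path N X \<omega>) \<partial>M)"
  define V where "V = (\<integral>\<omega>. (F (path N X \<omega>) - mu)^2 \<partial>M)"
  have transI: "integrable M (\<lambda>\<omega>. h (path N (Y j) \<omega>)) \<longleftrightarrow> integrable M (\<lambda>\<omega>. h (path N X \<omega>))"
    if [measurable]: "h \<in> borel_measurable PP" for h :: "_ \<Rightarrow> real" and j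
  proof -
    have "integrable M (\<lambda>\<omega>. h (path N (Y j) \<omega>)) \<longleftrightarrow> integrable (distr M PP (path N (Y j))) h"
      by (rule integrable_distr_eq[symmetric]) auto
    also have "\<dots> \<longleftrightarrow> integrable (distr M PP (path N X)) h" using dist[of j] unfolding PP_def by simp
    also have "\<dots> \<longleftrightarrow> integrable M (\<lambda>\<omega>. h (path N X \<omega>))"
      by (rule integrable_distr_eq) auto
    finally show ?thesis .
  qed
  have transE: "(\<integral>\<omega>. h (path N (Y j) \<omega>) \<partial>M) = (\<integral>\<omega>. h (path N X \<omega>) \<partial>M)"
    if [measurable]: "h \<in> borel_measurable PP" for h :: "_ \<Rightarrow> real" and j
  proof -
    have "(\<integral>\<omega>. h (path N (Y j) \<omega>) \<partial>M) = integral\<^sup>L (distr M PP (path N (Y j))) h"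
      by (rule integral_distr[symmetric]) auto
    also have "\<dots> = integral\<^sup>L (distr M PP (path N X)) h" using dist[of j] unfolding PP_def by simp
    also have "\<dots> = (\<integral>\<omega>. h (path N X \<omega>) \<partial>M)"
      by (rule integral_distr) auto
    finally show ?thesis .
  qed
  have ind2: "indep_vars (\<lambda>_. borel) (\<lambda>j \<omega>. F (path N (Y j) \<omega>)) UNIV"
    by (rule indep_vars_compose2[OF ind]) (use Fm in auto)
  show ?thesis unfolding mu_def[symmetric]
  proof (rule wlln_subseq[OF ind2, where V=V])
    fix j
    show "(\<lambda>\<omega>. F (path N (Y j) \<omega>)) \<in> borel_measurable M" by measurable
    show "integrable M (\<lambda>\<omega>. (F (path N (Y j) \<omega>))^2)"
      using transI[of "\<lambda>p. (F p)^2" j] Fsq by simp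
    show "expectation (\<lambda>\<omega>. F (path N (Y j) \<omega>)) = mu"
      unfolding mu_def by (rule transE) simp
    show "expectation (\<lambda>\<omega>. (F (path N (Y j) \<omega>) - mu)^2) \<le> V"
      unfolding V_def using transE[of "\<lambda>p. (F p - mu)^2" j] by simp
  qed
qed

lemma distPi_bound:
  fixes M :: "'w measure" and X :: "nat \<Rightarrow> 'w \<Rightarrow> real^'d" and phi :: "'k::finite \<Rightarrow> real^'d \<Rightarrow> nat \<Rightarrow> real"
  assumes P: "prob_space M" and Xm: "\<And>n. n < N \<Longrightarrow> X n \<in> borel_measurable M"
    and phiB: "\<And>k x n. \<bar>phi k x n\<bar> \<le> B" and N1: "N \<ge> 1"
  shows "distPi M X N (\<lambda>n. Phi phi n \<theta>) (\<lambda>n. Phi phi n \<theta>') \<le> B * (\<Sum>k\<in>UNIV. \<bar>\<theta> $ k - \<theta>' $ k\<bar>)"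
    and "0 \<le> distPi M X N (\<lambda>n. Phi phi n \<theta>) (\<lambda>n. Phi phi n \<theta>')"
proof -
  define D where "D = B * (\<Sum>k\<in>UNIV. \<bar>\<theta> $ k - \<theta>' $ k\<bar>)"
  have B0: "0 \<le> B" using phiB[of undefined undefined 0] by linarith
  have D0: "0 \<le> D" unfolding D_def using B0 by (simp add: sum_nonneg)
  have pt: "(Phi phi n \<theta> x - Phi phi n \<theta>' x)^2 \<le> D^2" for n x
  proof -
    have "\<bar>Phi phi n (\<theta> - \<theta>') x\<bar> \<le> B * (\<Sum>k\<in>UNIV. \<bar>(\<theta> - \<theta>') $ k\<bar>)" by (rule Phi_bound[OF phiB])
    then have "\<bar>Phi phi n \<theta> x - Phi phi n \<theta>' x\<bar> \<le> D" unfolding D_def Phi_diff by simp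
    then have "\<bar>Phi phi n \<theta> x - Phi phi n \<theta>' x\<bar>^2 \<le> D^2" by (rule power_mono) simp
    then show ?thesis by simp
  qed
  have trm: "sqrt (\<integral>x. (Phi phi n \<theta> x - Phi phi n \<theta>' x)^2 \<partial>distr M borel (X n)) \<le> D"
    and trm0: "0 \<le> sqrt (\<integral>x. (Phi phi n \<theta> x - Phi phi n \<theta>' x)^2 \<partial>distr M borel (X n))"
    if "n < N" for n
  proof -
    interpret Q: prob_space "distr M borel (X n)"
      by (rule prob_space.prob_space_distr[OF P]) (use Xm that in simp)
    have "(\<integral>x. (Phi phi n \<theta> x - Phi phi n \<theta>' x)^2 \<partial>distr M borel (X n)) \<le> D^2"
    proof (cases "integrable (distr M borel (X n)) (\<lambda>x. (Phi phi n \<theta> x - Phi phi n \<theta>' x)^2)")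
      case True then show ?thesis by (rule Q.integral_le_const) (simp add: pt)
    next
      case False then show ?thesis by (simp add: not_integrable_integral_eq)
    qed
    then show "sqrt (\<integral>x. (Phi phi n \<theta> x - Phi phi n \<theta>' x)^2 \<partial>distr M borel (X n)) \<le> D"
      using D0 real_sqrt_le_mono by fastforce
    show "0 \<le> sqrt (\<integral>x. (Phi phi n \<theta> x - Phi phi n \<theta>' x)^2 \<partial>distr M borel (X n))"
      by (simp add: integral_nonneg_AE)
  qed
  have "distPi M X N (\<lambda>n. Phi phi n \<theta>) (\<lambda>n. Phi phi n \<theta>') \<le> (1 / real N) * (\<Sum>n<N. D)"
    unfolding distPi_def by (intro mult_left_mono sum_mono trm) auto
  also have "\<dots> = D" using N1 by simp
  finally show "distPi M X N (\<lambda>n. Phi phi n \<theta>) (\<lambda>n. Phi phi n \<theta>') \<le> B * (\<Sum>k\<in>UNIV. \<bar>\<theta> $ k - \<theta>' $ k\<bar>)"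
    unfolding D_def .
  show "0 \<le> distPi M X N (\<lambda>n. Phi phi n \<theta>) (\<lambda>n. Phi phi n \<theta>')"
    unfolding distPi_def using trm0 by (intro mult_nonneg_nonneg sum_nonneg) auto
qed

lemma emp_lsq:
  fixes m :: nat and Y :: "nat \<Rightarrow> nat \<Rightarrow> 'w \<Rightarrow> real^'d" and phi :: "'k::finite \<Rightarrow> real^'d \<Rightarrow> nat \<Rightarrow> real"
  assumes phim: "\<And>k n. (\<lambda>x. phi k x n) \<in> borel_measurable borel"
    and phiB: "\<And>k x n. \<bar>phi k x n\<bar> \<le> B"
    and gm: "g \<in> borel_measurable borel" and al: "0 \<le> alpha"
  shows "lsq (count_space {..<m}) (\<lambda>n j. Y j n \<omega>) (\<lambda>n j. Y j (Suc n) \<omega>) N phi g alpha B"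
  unfolding lsq_def lsq_axioms_def
  using assms by (auto intro: finite_measure_count_space integrable_count_space)

lemma emp_Gm:
  fixes m :: nat
  assumes "lsq (count_space {..<m}) U V N phi g alpha B"
  shows "lsq.Gm (count_space {..<m}) U N phi = (\<chi> a b. \<Sum>n<N. \<Sum>j<m. phi a (U n j) n * phi b (U n j) n)"
  unfolding lsq.Gm_def[OF assms] lebesgue_integral_count_space_finite[OF finite_lessThan] ..

lemma emp_bv:
  fixes m :: nat
  assumes "lsq (count_space {..<m}) U V N phi g alpha B"
  shows "lsq.bv (count_space {..<m}) U V N phi g \<theta> = (\<chi> a. \<Sum>n<N. \<Sum>j<m. phi a (U n j) n * target phi g N n \<theta> (V n j))"
  unfolding lsq.bv_def[OF assms] lebesgue_integral_count_space_finite[OF finite_lessThan] ..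

lemma emp_T:
  fixes m :: nat and Y :: "nat \<Rightarrow> nat \<Rightarrow> 'w \<Rightarrow> real^'d" and phi :: "'k::finite \<Rightarrow> real^'d \<Rightarrow> nat \<Rightarrow> real"
  assumes L: "lsq (count_space {..<m}) (\<lambda>n j. Y j n \<omega>) (\<lambda>n j. Y j (Suc n) \<omega>) N phi g alpha B"
  shows "empMap Y m \<omega> N phi g alpha = lsq.T (count_space {..<m}) (\<lambda>n j. Y j n \<omega>) (\<lambda>n j. Y j (Suc n) \<omega>) N phi g alpha"
proof
  fix \<theta>
  have G: "(\<chi> i l. \<Sum>j<m. \<Sum>n<N. phi i (Y j n \<omega>) n * phi l (Y j n \<omega>) n) = lsq.Gm (count_space {..<m}) (\<lambda>n j. Y j n \<omega>) N phi"
    unfolding emp_Gm[OF L] by (simp add: sum.swap[of _ "{..<m}"])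
  have b: "(\<chi> i. \<Sum>j<m. \<Sum>n<N. phi i (Y j n \<omega>) n * target phi g N n \<theta> (Y j (Suc n) \<omega>))
      = lsq.bv (count_space {..<m}) (\<lambda>n j. Y j n \<omega>) (\<lambda>n j. Y j (Suc n) \<omega>) N phi g \<theta>"
    unfolding emp_bv[OF L] by (simp add: sum.swap[of _ "{..<m}"])
  show "empMap Y m \<omega> N phi g alpha \<theta> = lsq.T (count_space {..<m}) (\<lambda>n j. Y j n \<omega>) (\<lambda>n j. Y j (Suc n) \<omega>) N phi g alpha \<theta>"
    unfolding empMap_def lsq.T_def[OF L] G b ..
qed

lemma pop_facts:
  fixes N :: nat and M :: "'w measure" and X X' :: "nat \<Rightarrow> 'w \<Rightarrow> real^'d" and phi :: "'k::finite \<Rightarrow> real^'d \<Rightarrow> nat \<Rightarrow> real"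
  assumes L: "lsq M X' (\<lambda>n. X' (Suc n)) N phi g alpha B"
    and X'eq: "\<And>n. n \<le> N \<Longrightarrow> X' n = X n"
  shows "popGram M X N phi = lsq.Gm M X' N phi"
    and "popMap M X N phi g alpha = lsq.T M X' (\<lambda>n. X' (Suc n)) N phi g alpha"
proof -
  show G: "popGram M X N phi = lsq.Gm M X' N phi"
    unfolding popGram_def lsq.Gm_def[OF L] using X'eq by (simp add: vec_eq_iff)
  show "popMap M X N phi g alpha = lsq.T M X' (\<lambda>n. X' (Suc n)) N phi g alpha"
  proof
    fix \<theta>
    have "(\<chi> i. \<Sum>n<N. \<integral>\<omega>. phi i (X n \<omega>) n * target phi g N n \<theta> (X (Suc n) \<omega>) \<partial>M) = lsq.bv M X' (\<lambda>n. X' (Suc n)) N phi g \<theta>"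
      unfolding lsq.bv_def[OF L] using X'eq by (simp add: vec_eq_iff)
    then show "popMap M X N phi g alpha \<theta> = lsq.T M X' (\<lambda>n. X' (Suc n)) N phi g alpha \<theta>"
      unfolding popMap_def lsq.T_def[OF L] G by simp
  qed
qed

theorem theorem10:
  fixes M :: "'w measure"
    and X :: "nat \<Rightarrow> 'w \<Rightarrow> real^'d"
    and Y :: "nat \<Rightarrow> nat \<Rightarrow> 'w \<Rightarrow> real^'d"
    and N :: nat
    and g :: "real^'d \<Rightarrow> real"
    and alpha :: real
    and sig :: "real \<Rightarrow> real"
    and a :: "'k::finite \<Rightarrow> real^'d" and c :: "'k \<Rightarrow> real" and b :: "'k \<Rightarrow> real"
    and \<theta>0 :: "real^'k"
  assumes "prob_space M"
    and "N \<ge> 1"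
    and "\<And>n. n \<le> N \<Longrightarrow> X n \<in> borel_measurable M"
    and "markov M X N"
    and "g \<in> borel_measurable borel"
    and "\<And>x. g x \<ge> 0"
    and "\<And>n. n \<le> N \<Longrightarrow> integrable M (\<lambda>\<omega>. (g (X n \<omega>))\<^sup>2)"
    and "0 < alpha" and "alpha < 1"
    and "sig \<in> borel_measurable borel"
    and "bounded (range sig)"
    and "invertible (popGram M X N (rbf sig a c b))"
    and "\<And>j n. n \<le> N \<Longrightarrow> Y j n \<in> borel_measurable M"
    and "prob_space.indep_vars M (\<lambda>_. PiM {..N} (\<lambda>_. borel)) (\<lambda>j. path N (Y j)) UNIV"
    and "\<And>j. distr M (PiM {..N} (\<lambda>_. borel)) (path N (Y j))
              = distr M (PiM {..N} (\<lambda>_. borel)) (path N X)"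
  shows "\<exists>m :: nat \<Rightarrow> 'w \<Rightarrow> nat.
           (\<forall>i. m i \<in> measurable M (count_space UNIV)) \<and>
           (AE \<omega> in M. (\<lambda>i. distPi M X N
               (\<lambda>n. Phi (rbf sig a c b) n (thetaHat Y (m i \<omega>) \<omega> N (rbf sig a c b) g alpha \<theta>0 i))
               (\<lambda>n. Phi (rbf sig a c b) n (thetaStar M X N (rbf sig a c b) g alpha)))
             \<longlonglongrightarrow> 0)"
proof -
  interpret P: prob_space M by (rule assms(1))
  note [measurable] = assms(5) assms(10)
  define phi where "phi = rbf sig a c b"
  obtain B where B: "\<And>x. \<bar>sig x\<bar> \<le> B" using assms(11) unfolding bounded_iff by auto
  have phiB: "\<And>k x n. \<bar>phi k x n\<bar> \<le> B" unfolding phi_def rbf_def using B by simp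
  have phim[measurable]: "\<And>k n. (\<lambda>x. phi k x n) \<in> borel_measurable borel"
    unfolding phi_def rbf_def by measurable
  have al0: "0 \<le> alpha" using assms(8) by simp
  define X' where "X' n = (if n \<le> N then X n else (\<lambda>_. 0::real^'d))" for n
  have X'eq: "\<And>n. n \<le> N \<Longrightarrow> X' n = X n" by (simp add: X'_def)
  have X'm: "\<And>n. X' n \<in> borel_measurable M" using assms(3) by (simp add: X'_def)
  have LP: "lsq M X' (\<lambda>n. X' (Suc n)) N phi g alpha B"
    unfolding lsq_def lsq_axioms_def
    using P.finite_measure_axioms X'm phim phiB assms(5) al0 assms(7) X'eq by auto
  interpret pop: lsq M X' "\<lambda>n. X' (Suc n)" N phi g alpha B by (rule LP)
  have popG: "popGram M X N phi = pop.Gm" and popT: "popMap M X N phi g alpha = pop.T"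
    using pop_facts[OF LP X'eq] by auto
  have inv: "invertible pop.Gm" using assms(12) popG phi_def by simp
  have ex1: "\<exists>!\<theta>. pop.T \<theta> = \<theta>" by (rule pop.fixpoint[OF inv assms(9)])
  define ts where "ts = thetaStar M X N phi g alpha"
  have ts: "pop.T ts = ts" unfolding ts_def thetaStar_def popT by (rule theI'[OF ex1])
  obtain lam where lam: "0 < lam" "\<And>v. lam * (norm v)^2 \<le> qf pop.Gm v"
    using pd_bound[OF pop.Gm_symm _ inv] pop.Gm_psd by blast
  have Gts: "pop.Gm *v ts = alpha *\<^sub>R pop.bv ts"
  proof -
    have "pop.Gm *v pop.T ts = alpha *\<^sub>R pop.bv ts"
      unfolding pop.T_def by (simp add: matrix_vector_mult_scaleR matrix_vector_mul_assoc matrix_inv_props[OF inv])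
    then show ?thesis using ts by simp
  qed
  define PP where "PP = PiM {..N} (\<lambda>_. borel :: (real^'d) measure)"
  have comp: "(\<lambda>p. p n) \<in> measurable PP borel" if "n \<le> N" for n
    unfolding PP_def using measurable_component_singleton[of n "{..N}" "\<lambda>_. borel"] that by simp
  define Fg where "Fg x y n p = phi x (p n) n * phi y (p n) n" for x y n and p :: "nat \<Rightarrow> real^'d"
  define Fb where "Fb x n p = phi x (p n) n * target phi g N n ts (p (Suc n))" for x n and p :: "nat \<Rightarrow> real^'d"
  have Fgm: "Fg x y n \<in> borel_measurable PP" if "n \<le> N" for x y n
    unfolding Fg_def[abs_def]
    by (intro borel_measurable_times measurable_compose[OF comp[OF that] phim])
  have Fbm: "Fb x n \<in> borel_measurable PP" if "n < N" for x n
    unfolding Fb_def[abs_def] using that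
    by (intro borel_measurable_times measurable_compose[OF comp phim] measurable_compose[OF comp pop.target_meas]) auto
  have pX: "path N X \<in> measurable M PP" unfolding PP_def by (rule path_meas) (rule assms(3))
  have pathX: "path N X \<omega> n = X n \<omega>" and pathY: "path N (Y j) \<omega> n = Y j n \<omega>" if "n \<le> N" for n \<omega> j
    using that by (auto simp: path_def)
  have sqg: "integrable M (\<lambda>\<omega>. (Fg x y n (path N X \<omega>))^2)" if "n \<le> N" for x y n
  proof (rule P.integrable_const_bound[where B="(B * B)^2"])
    show "AE \<omega> in M. norm ((Fg x y n (path N X \<omega>))^2) \<le> (B * B)^2"
    proof (intro AE_I2)
      fix \<omega>
      have "\<bar>Fg x y n (path N X \<omega>)\<bar> \<le> B * B" unfolding Fg_def abs_mult
        using phiB pop.B0 by (intro mult_mono) auto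
      then have "\<bar>Fg x y n (path N X \<omega>)\<bar>^2 \<le> (B * B)^2" by (rule power_mono) simp
      then show "norm ((Fg x y n (path N X \<omega>))^2) \<le> (B * B)^2" by simp
    qed
    show "(\<lambda>\<omega>. (Fg x y n (path N X \<omega>))^2) \<in> borel_measurable M"
      using measurable_compose[OF pX Fgm[OF that]] by simp
  qed
  define Cs where "Cs = B * (\<Sum>k\<in>UNIV. \<bar>ts $ k\<bar>)"
  have Cs0: "0 \<le> Cs" unfolding Cs_def using pop.B0 by (simp add: sum_nonneg)
  have sqb: "integrable M (\<lambda>\<omega>. (Fb x n (path N X \<omega>))^2)" if "n < N" for x n
  proof (rule Bochner_Integration.integrable_bound)
    show "integrable M (\<lambda>\<omega>. 2 * B^2 * ((g (X (Suc n) \<omega>))^2 + Cs^2))"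
      using assms(7)[of "Suc n"] that by simp
    show "(\<lambda>\<omega>. (Fb x n (path N X \<omega>))^2) \<in> borel_measurable M"
      using measurable_compose[OF pX Fbm[OF that]] by simp
    show "AE \<omega> in M. norm ((Fb x n (path N X \<omega>))^2) \<le> norm (2 * B^2 * ((g (X (Suc n) \<omega>))^2 + Cs^2))"
    proof (intro AE_I2)
      fix \<omega>
      define u where "u = g (X (Suc n) \<omega>)"
      have t: "\<bar>target phi g N n ts (X (Suc n) \<omega>)\<bar> \<le> \<bar>u\<bar> + Cs"
      proof -
        have "\<bar>Phi phi (Suc n) ts (X (Suc n) \<omega>)\<bar> \<le> Cs" unfolding Cs_def by (rule Phi_bound[OF phiB])
        then show ?thesis unfolding target_def u_def using Cs0 by (auto simp: max_def)
      qed
      have "\<bar>Fb x n (path N X \<omega>)\<bar> \<le> B * (\<bar>u\<bar> + Cs)"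
        unfolding Fb_def abs_mult using that pathX[of n \<omega>] pathX[of "Suc n" \<omega>] phiB pop.B0 t
        by (intro mult_mono) auto
      then have "\<bar>Fb x n (path N X \<omega>)\<bar>^2 \<le> (B * (\<bar>u\<bar> + Cs))^2" by (rule power_mono) simp
      also have "\<dots> \<le> 2 * B^2 * (u^2 + Cs^2)"
      proof -
        have "(\<bar>u\<bar> + Cs)^2 \<le> 2 * (u^2 + Cs^2)"
        proof -
          have "0 \<le> (\<bar>u\<bar> - Cs)^2" by simp
          then show ?thesis by (simp add: power2_eq_square algebra_simps)
        qed
        then have h: "B^2 * (\<bar>u\<bar> + Cs)^2 \<le> B^2 * (2 * (u^2 + Cs^2))" by (rule mult_left_mono) simp
        have e1: "(B * (\<bar>u\<bar> + Cs))^2 = B^2 * (\<bar>u\<bar> + Cs)^2" by (rule power_mult_distrib)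
        have e2: "2 * B^2 * (u^2 + Cs^2) = B^2 * (2 * (u^2 + Cs^2))" by (simp add: mult_ac)
        show ?thesis unfolding e1 e2 by (rule h)
      qed
      finally show "norm ((Fb x n (path N X \<omega>))^2) \<le> norm (2 * B^2 * ((g (X (Suc n) \<omega>))^2 + Cs^2))"
        unfolding u_def by simp
    qed
  qed
  have lln: "AE \<omega> in M. (\<lambda>i. (\<Sum>j<8^i. F (path N (Y j) \<omega>)) / (8::real)^i) \<longlonglongrightarrow> (\<integral>\<omega>. F (path N X \<omega>) \<partial>M)"
    if "F \<in> borel_measurable PP" "integrable M (\<lambda>\<omega>. (F (path N X \<omega>))^2)" for F
    by (rule lln_path[OF assms(1) assms(3) assms(13) assms(14) assms(15)]) (use that in \<open>auto simp: PP_def\<close>)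
  have AEg: "AE \<omega> in M. \<forall>x\<in>UNIV. \<forall>y\<in>UNIV. \<forall>n\<in>{..<N}.
      (\<lambda>i. (\<Sum>j<8^i. Fg x y n (path N (Y j) \<omega>)) / (8::real)^i) \<longlonglongrightarrow> (\<integral>\<omega>. Fg x y n (path N X \<omega>) \<partial>M)"
    by (intro AE_finite_allI lln Fgm sqg) auto
  have AEb: "AE \<omega> in M. \<forall>x\<in>UNIV. \<forall>n\<in>{..<N}.
      (\<lambda>i. (\<Sum>j<8^i. Fb x n (path N (Y j) \<omega>)) / (8::real)^i) \<longlonglongrightarrow> (\<integral>\<omega>. Fb x n (path N X \<omega>) \<partial>M)"
    by (intro AE_finite_allI lln Fbm sqb) auto
  have main: "(\<lambda>i. distPi M X N (\<lambda>n. Phi phi n (thetaHat Y (8^i) \<omega> N phi g alpha \<theta>0 i)) (\<lambda>n. Phi phi n ts)) \<longlonglongrightarrow> 0"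
    if hg: "\<forall>x\<in>UNIV. \<forall>y\<in>UNIV. \<forall>n\<in>{..<N}.
      (\<lambda>i. (\<Sum>j<8^i. Fg x y n (path N (Y j) \<omega>)) / (8::real)^i) \<longlonglongrightarrow> (\<integral>\<omega>. Fg x y n (path N X \<omega>) \<partial>M)"
    and hb: "\<forall>x\<in>UNIV. \<forall>n\<in>{..<N}.
      (\<lambda>i. (\<Sum>j<8^i. Fb x n (path N (Y j) \<omega>)) / (8::real)^i) \<longlonglongrightarrow> (\<integral>\<omega>. Fb x n (path N X \<omega>) \<partial>M)"
    for \<omega>
  proof -
    have Lm: "lsq (count_space {..<m}) (\<lambda>n j. Y j n \<omega>) (\<lambda>n j. Y j (Suc n) \<omega>) N phi g alpha B" for m :: nat
      by (rule emp_lsq[OF phim phiB assms(5) al0])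
    define EG where "EG m = lsq.Gm (count_space {..<m}) (\<lambda>n j. Y j n \<omega>) N phi" for m :: nat
    define Eb where "Eb m = lsq.bv (count_space {..<m}) (\<lambda>n j. Y j n \<omega>) (\<lambda>n j. Y j (Suc n) \<omega>) N phi g ts" for m :: nat
    define ET where "ET m = lsq.T (count_space {..<m}) (\<lambda>n j. Y j n \<omega>) (\<lambda>n j. Y j (Suc n) \<omega>) N phi g alpha" for m :: nat
    define H where "H i = (1 / 8^i) *\<^sub>R EG (8^i)" for i :: nat
    define bb where "bb i = (1 / 8^i) *\<^sub>R Eb (8^i)" for i :: nat
    have Hent: "H i $ x $ y = (\<Sum>n<N. (\<Sum>j<8^i. Fg x y n (path N (Y j) \<omega>)) / 8^i)" for i x y
      unfolding H_def EG_def emp_Gm[OF Lm] Fg_def by (simp add: sum_divide_distrib pathY)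
    have Gent: "pop.Gm $ x $ y = (\<Sum>n<N. \<integral>\<omega>. Fg x y n (path N X \<omega>) \<partial>M)" for x y
      unfolding pop.Gm_def Fg_def using X'eq by (simp add: pathX)
    have bent: "bb i $ x = (\<Sum>n<N. (\<Sum>j<8^i. Fb x n (path N (Y j) \<omega>)) / 8^i)" for i x
      unfolding bb_def Eb_def emp_bv[OF Lm] Fb_def by (simp add: sum_divide_distrib pathY)
    have bpent: "pop.bv ts $ x = (\<Sum>n<N. \<integral>\<omega>. Fb x n (path N X \<omega>) \<partial>M)" for x
      unfolding pop.bv_def Fb_def using X'eq by (simp add: pathX)
    have Hconv: "H \<longlonglongrightarrow> pop.Gm"
    proof -
      have "(\<lambda>i. H i $ x $ y) \<longlonglongrightarrow> pop.Gm $ x $ y" for x y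
        unfolding Hent Gent by (intro tendsto_sum) (use hg in auto)
      then have "(\<lambda>i. H i $ x) \<longlonglongrightarrow> pop.Gm $ x" for x by (rule vec_tendstoI)
      then show ?thesis by (rule vec_tendstoI)
    qed
    have bconv: "bb \<longlonglongrightarrow> pop.bv ts"
    proof -
      have "(\<lambda>i. bb i $ x) \<longlonglongrightarrow> pop.bv ts $ x" for x
        unfolding bent bpent by (intro tendsto_sum) (use hb in auto)
      then show ?thesis by (rule vec_tendstoI)
    qed
    have Hsym: "symm (H i)" for i
      using lsq.Gm_symm[OF Lm] unfolding symm_def H_def EG_def by simp
    have Hpsd: "0 \<le> qf (H i) v" for i v
      unfolding H_def qf_scaleM EG_def using lsq.Gm_psd[OF Lm] by simp
    have invE: "invertible (EG (8^i))" if "invertible (H i)" for i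
    proof -
      have "EG (8^i) = (8^i) *\<^sub>R H i" unfolding H_def by simp
      then show ?thesis using scalar_invertible[OF _ that, of "8^i"] by simp
    qed
    have contr: "qf (H i) (ET (8^i) \<theta> - ET (8^i) \<theta>') \<le> alpha^2 * qf (H i) (\<theta> - \<theta>')"
      if "invertible (H i)" for i \<theta> \<theta>'
    proof -
      have "lsq.q (count_space {..<8^i}) (\<lambda>n j. Y j n \<omega>) N phi (ET (8^i) \<theta> - ET (8^i) \<theta>')
          \<le> alpha^2 * lsq.q (count_space {..<8^i}) (\<lambda>n j. Y j n \<omega>) N phi (\<theta> - \<theta>')"
        unfolding ET_def by (rule lsq.contraction[OF Lm invE[OF that, unfolded EG_def]])
      then have "qf (EG (8^i)) (ET (8^i) \<theta> - ET (8^i) \<theta>') \<le> alpha^2 * qf (EG (8^i)) (\<theta> - \<theta>')"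
        unfolding EG_def lsq.q_qf[OF Lm] .
      then have "(1 / 8^i) * qf (EG (8^i)) (ET (8^i) \<theta> - ET (8^i) \<theta>') \<le> (1 / 8^i) * (alpha^2 * qf (EG (8^i)) (\<theta> - \<theta>'))"
        by (rule mult_left_mono) simp
      then show ?thesis unfolding H_def qf_scaleM by (simp add: mult_ac)
    qed
    have ev: "eventually (\<lambda>i. invertible (H i)) sequentially" by (rule ev_inv[OF lam Hconv])
    have Hts: "(\<lambda>i. H i *v ts) \<longlonglongrightarrow> pop.Gm *v ts"
    proof -
      have "(\<lambda>i. (H i *v ts) $ x) \<longlonglongrightarrow> (pop.Gm *v ts) $ x" for x
      proof -
        have "(\<lambda>i. \<Sum>y\<in>UNIV. H i $ x $ y * ts $ y) \<longlonglongrightarrow> (\<Sum>y\<in>UNIV. pop.Gm $ x $ y * ts $ y)"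
          by (intro tendsto_sum tendsto_mult tendsto_const tendsto_vec_nth Hconv)
        then show ?thesis by (simp add: matrix_vector_mult_def)
      qed
      then show ?thesis by (rule vec_tendstoI)
    qed
    have delta: "(\<lambda>i. H i *v (ET (8^i) ts - ts)) \<longlonglongrightarrow> 0"
    proof -
      have "(\<lambda>i. alpha *\<^sub>R bb i - H i *v ts) \<longlonglongrightarrow> alpha *\<^sub>R pop.bv ts - pop.Gm *v ts"
        by (intro tendsto_diff tendsto_scaleR tendsto_const bconv Hts)
      then have lim: "(\<lambda>i. alpha *\<^sub>R bb i - H i *v ts) \<longlonglongrightarrow> 0" using Gts by simp
      have "eventually (\<lambda>i. alpha *\<^sub>R bb i - H i *v ts = H i *v (ET (8^i) ts - ts)) sequentially"
        using ev
      proof (rule eventually_mono)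
        fix i assume iv: "invertible (H i)"
        have "H i *v ET (8^i) ts = (1 / 8^i) *\<^sub>R (EG (8^i) *v (alpha *\<^sub>R (matrix_inv (EG (8^i)) *v Eb (8^i))))"
          unfolding ET_def lsq.T_def[OF Lm] H_def EG_def Eb_def
          by (simp add: scaleR_matrix_vector_assoc)
        also have "\<dots> = alpha *\<^sub>R bb i"
          unfolding bb_def
          by (simp add: matrix_vector_mult_scaleR matrix_vector_mul_assoc matrix_inv_props[OF invE[OF iv]])
        finally show "alpha *\<^sub>R bb i - H i *v ts = H i *v (ET (8^i) ts - ts)"
          by (simp add: matrix_vector_mult_diff_distrib)
      qed
      then show ?thesis using lim by (rule Lim_transform_eventually[rotated])
    qed
    have conv: "(\<lambda>i. (ET (8^i) ^^ i) \<theta>0) \<longlonglongrightarrow> ts"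
      by (rule iter_conv[OF lam Hconv Hsym Hpsd contr al0 assms(9) delta])
    have thH: "thetaHat Y (8^i) \<omega> N phi g alpha \<theta>0 i = (ET (8^i) ^^ i) \<theta>0" for i
      unfolding thetaHat_def emp_T[where Y=Y and \<omega>=\<omega> and m="8^i", OF Lm] ET_def ..
    have db0: "0 \<le> distPi M X N (\<lambda>n. Phi phi n \<theta>) (\<lambda>n. Phi phi n \<theta>')" for \<theta> \<theta>'
      by (rule distPi_bound(2)[where X=X, OF assms(1) _ phiB assms(2)]) (use assms(3) in simp)
    have db1: "distPi M X N (\<lambda>n. Phi phi n \<theta>) (\<lambda>n. Phi phi n \<theta>') \<le> B * (\<Sum>k\<in>UNIV. \<bar>\<theta> $ k - \<theta>' $ k\<bar>)" for \<theta> \<theta>'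
      by (rule distPi_bound(1)[where X=X, OF assms(1) _ phiB assms(2)]) (use assms(3) in simp)
    have up: "(\<lambda>i. B * (\<Sum>k\<in>UNIV. \<bar>(ET (8^i) ^^ i) \<theta>0 $ k - ts $ k\<bar>)) \<longlonglongrightarrow> B * (\<Sum>k\<in>(UNIV::'k set). \<bar>ts $ k - ts $ k\<bar>)"
      by (intro tendsto_mult tendsto_const tendsto_sum tendsto_rabs tendsto_diff tendsto_vec_nth conv)
    show ?thesis unfolding thH
    proof (rule tendsto_sandwich[OF _ _ tendsto_const])
      show "eventually (\<lambda>i. 0 \<le> distPi M X N (\<lambda>n. Phi phi n ((ET (8^i) ^^ i) \<theta>0)) (\<lambda>n. Phi phi n ts)) sequentially"
        using db0 by simp
      show "eventually (\<lambda>i. distPi M X N (\<lambda>n. Phi phi n ((ET (8^i) ^^ i) \<theta>0)) (\<lambda>n. Phi phi n ts)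
          \<le> B * (\<Sum>k\<in>UNIV. \<bar>(ET (8^i) ^^ i) \<theta>0 $ k - ts $ k\<bar>)) sequentially"
        using db1 by simp
      show "(\<lambda>i. B * (\<Sum>k\<in>UNIV. \<bar>(ET (8^i) ^^ i) \<theta>0 $ k - ts $ k\<bar>)) \<longlonglongrightarrow> 0"
        using up by simp
    qed
  qed
  show ?thesis
  proof (rule exI[of _ "\<lambda>i _. 8^i"], intro conjI allI)
    show "(\<lambda>i _. 8^i) i \<in> measurable M (count_space UNIV)" for i by simp
    have "AE \<omega> in M. (\<lambda>i. distPi M X N (\<lambda>n. Phi phi n (thetaHat Y (8^i) \<omega> N phi g alpha \<theta>0 i)) (\<lambda>n. Phi phi n ts)) \<longlonglongrightarrow> 0"
      using AEg AEb by eventually_elim (rule main)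
    then show "AE \<omega> in M. (\<lambda>i. distPi M X N
               (\<lambda>n. Phi (rbf sig a c b) n (thetaHat Y ((\<lambda>i _. 8^i) i \<omega>) \<omega> N (rbf sig a c b) g alpha \<theta>0 i))
               (\<lambda>n. Phi (rbf sig a c b) n (thetaStar M X N (rbf sig a c b) g alpha)))
             \<longlonglongrightarrow> 0"
      unfolding phi_def[symmetric] ts_def[symmetric] by simp
  qed
qed

end
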